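(* Let $a,b>0$ be linearly dependent over $\mathbb{Q}$. Then there is a smooth function $h$ with Taylor expansion at the origin of the form $h(x,y)=a^2x^2+b^2y^2+\sum_{m+n\ge3}h_{m,n}x^my^n$ such that the equation $z_x^2+z_y^2=h$ has no solution $z$ of the form $z(x,y)=\frac12(ax^2-by^2)+\sum_{m+n\ge3}z_{m,n}x^my^n$. In particular, if $m,n$ are positive integers with $ma-nb=0$ and $m+n\ge4$ and $c\ne0$, then for $h=a^2x^2+b^2y^2+cx^my^n$ the equation $z_x^2+z_y^2=h$ has no solution of that form in formal power series, and no such $C^k$ solution for $k\ge m+n$. *)

theory Defs
  imports "HOL-Analysis.Analysis"
begin

definition px :: "(real \<times> real \<Rightarrow> real) \<Rightarrow> real \<times> real \<Rightarrow> real" where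
  "px f = (\<lambda>(x, y). deriv (\<lambda>t. f (t, y)) x)"

definition py :: "(real \<times> real \<Rightarrow> real) \<Rightarrow> real \<times> real \<Rightarrow> real" where
  "py f = (\<lambda>(x, y). deriv (\<lambda>t. f (x, t)) y)"

fun Ck :: "nat \<Rightarrow> (real \<times> real \<Rightarrow> real) \<Rightarrow> (real \<times> real) set \<Rightarrow> bool" where
  "Ck 0 f S = continuous_on S f"
| "Ck (Suc k) f S = (f differentiable_on S \<and> Ck k (px f) S \<and> Ck k (py f) S)"

definition smooth_on :: "(real \<times> real \<Rightarrow> real) \<Rightarrow> (real \<times> real) set \<Rightarrow> bool" where
  "smooth_on f S = (\<forall>k. Ck k f S)"

definition taylor_coeff :: "(real \<times> real \<Rightarrow> real) \<Rightarrow> nat \<Rightarrow> nat \<Rightarrow> real" where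
  "taylor_coeff f m n = ((px ^^ m) ((py ^^ n) f)) (0, 0) / (fact m * fact n)"

text \<open>Formal power series in two variables as coefficient arrays.\<close>
definition conv2 :: "(nat \<Rightarrow> nat \<Rightarrow> real) \<Rightarrow> (nat \<Rightarrow> nat \<Rightarrow> real) \<Rightarrow> nat \<Rightarrow> nat \<Rightarrow> real" where
  "conv2 f g p q = (\<Sum>i\<le>p. \<Sum>j\<le>q. f i j * g (p - i) (q - j))"

definition fdx :: "(nat \<Rightarrow> nat \<Rightarrow> real) \<Rightarrow> nat \<Rightarrow> nat \<Rightarrow> real" where
  "fdx z i j = real (i + 1) * z (i + 1) j"

definition fdy :: "(nat \<Rightarrow> nat \<Rightarrow> real) \<Rightarrow> nat \<Rightarrow> nat \<Rightarrow> real" where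
  "fdy z i j = real (j + 1) * z i (j + 1)"

definition h_low :: "real \<Rightarrow> real \<Rightarrow> nat \<Rightarrow> nat \<Rightarrow> real" where
  "h_low a b i j = (if (i, j) = (2, 0) then a^2 else if (i, j) = (0, 2) then b^2 else 0)"

definition z_low :: "real \<Rightarrow> real \<Rightarrow> nat \<Rightarrow> nat \<Rightarrow> real" where
  "z_low a b i j = (if (i, j) = (2, 0) then a / 2 else if (i, j) = (0, 2) then - b / 2 else 0)"

end

theory Submission imports Defs "HOL-Computational_Algebra.Formal_Power_Series" begin

type_synonym fps2 = "real fps fps"

definition cf :: "fps2 \<Rightarrow> nat \<Rightarrow> nat \<Rightarrow> real" where "cf F i j = fps_nth (fps_nth F j) i"
definition mk :: "(nat \<Rightarrow> nat \<Rightarrow> real) \<Rightarrow> fps2" where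
  "mk c = Abs_fps (\<lambda>j. Abs_fps (\<lambda>i. c i j))"
definition dX :: "fps2 \<Rightarrow> fps2" where "dX F = Abs_fps (\<lambda>j. fps_deriv (fps_nth F j))"
definition KK :: "real \<Rightarrow> fps2" where "KK c = fps_const (fps_const c)"
definition x2 :: fps2 where "x2 = fps_const fps_X"
definition y2 :: fps2 where "y2 = fps_X"

lemma cf_mk[simp]: "cf (mk c) i j = c i j" by (simp add: cf_def mk_def)
lemma fps2_eqI: "(\<And>i j. cf F i j = cf G i j) \<Longrightarrow> F = G"
  by (simp add: cf_def fps_ext)
lemma dX_nth[simp]: "fps_nth (dX F) j = fps_deriv (fps_nth F j)" by (simp add: dX_def)

lemma cf_dX[simp]: "cf (dX F) i j = real (Suc i) * cf F (Suc i) j"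
  by (simp add: cf_def)
lemma cf_dY[simp]: "cf (fps_deriv F) i j = real (Suc j) * cf F i (Suc j)"
proof -
  have "(of_nat (Suc j) * fps_nth F (Suc j) :: real fps) = fps_const (of_nat (Suc j)) * fps_nth F (Suc j)"
    by (simp only: fps_of_nat)
  then show ?thesis by (simp only: cf_def fps_deriv_nth fps_mult_left_const_nth Suc_eq_plus1)
qed
lemma cf_add[simp]: "cf (F + G) i j = cf F i j + cf G i j" by (simp add: cf_def)
lemma cf_diff[simp]: "cf (F - G) i j = cf F i j - cf G i j" by (simp add: cf_def)
lemma cf_uminus[simp]: "cf (- F) i j = - cf F i j" by (simp add: cf_def)
lemma cf_zero[simp]: "cf 0 i j = 0" by (simp add: cf_def)
lemma cf_sum: "cf (sum f S) i j = (\<Sum>k\<in>S. cf (f k) i j)"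
  by (induction S rule: infinite_finite_induct) (auto simp: cf_def)
lemma cf_mult: "cf (F * G) p q = (\<Sum>j\<le>q. \<Sum>i\<le>p. cf F i j * cf G (p - i) (q - j))"
  by (simp add: cf_def fps_mult_nth fps_sum_nth atLeast0AtMost)
lemma cf_KK_mult[simp]: "cf (KK c * F) i j = c * cf F i j"
  by (simp add: cf_def KK_def fps_mult_left_const_nth)
lemma cf_KK[simp]: "cf (KK c) i j = (if i = 0 \<and> j = 0 then c else 0)"
  by (simp add: cf_def KK_def)
lemma cf_one[simp]: "cf 1 i j = (if i = 0 \<and> j = 0 then 1 else 0)"
  by (simp add: cf_def)
lemma KK_0[simp]: "KK 0 = 0" by (simp add: KK_def)
lemma KK_1[simp]: "KK 1 = 1" by (simp add: KK_def)
lemma KK_mult: "KK (c * d) = KK c * KK d" by (simp add: KK_def)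
lemma KK_add: "KK (c + d) = KK c + KK d" by (simp add: KK_def)
lemma KK_diff: "KK (c - d) = KK c - KK d" by (simp add: KK_def)
lemma KK_uminus: "KK (- c) = - KK c" by (simp add: KK_def)
lemma KK_power: "KK (c ^ k) = KK c ^ k" by (simp add: KK_def fps_const_power)

lemma cf_mono: "cf (x2 ^ i * y2 ^ j) p q = (if p = i \<and> q = j then 1 else 0)"
  by (simp add: cf_def x2_def y2_def fps_const_power fps_mult_left_const_nth fps_X_power_nth)
lemma cf_x2[simp]: "cf x2 p q = (if p = 1 \<and> q = 0 then 1 else 0)"
  using cf_mono[of 1 0 p q] by simp
lemma cf_y2[simp]: "cf y2 p q = (if p = 0 \<and> q = 1 then 1 else 0)"
  using cf_mono[of 0 1 p q] by simp

lemma dX_mult: "dX (F * G) = dX F * G + F * dX G"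
proof (rule fps_ext)
  fix j
  show "fps_nth (dX (F * G)) j = fps_nth (dX F * G + F * dX G) j"
    by (simp add: fps_mult_nth fps_deriv_sum fps_deriv_mult sum.distrib add.commute)
qed
lemma dX_add[simp]: "dX (F + G) = dX F + dX G" by (rule fps_ext) simp
lemma dX_diff[simp]: "dX (F - G) = dX F - dX G" by (rule fps_ext) simp
lemma dX_KK[simp]: "dX (KK c) = 0" by (rule fps_ext) (simp add: KK_def)
lemma dX_x2[simp]: "dX x2 = 1" by (rule fps_ext) (simp add: x2_def)
lemma dX_y2[simp]: "dX y2 = 0" by (rule fps2_eqI) simp
lemma dY_KK[simp]: "fps_deriv (KK c) = 0" by (simp add: KK_def)
lemma dY_x2[simp]: "fps_deriv x2 = 0" by (simp add: x2_def)
lemma dY_y2[simp]: "fps_deriv y2 = 1" by (simp add: y2_def)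

definition Xd :: "fps2 \<Rightarrow> fps2 \<Rightarrow> fps2 \<Rightarrow> fps2" where
  "Xd Zx Zy G = Zx * dX G + Zy * fps_deriv G"

lemma Xd_mult: "Xd Zx Zy (F * G) = Xd Zx Zy F * G + F * Xd Zx Zy G"
  by (simp add: Xd_def dX_mult fps_deriv_mult algebra_simps)
lemma Xd_add: "Xd Zx Zy (F + G) = Xd Zx Zy F + Xd Zx Zy G"
  by (simp add: Xd_def algebra_simps)
lemma Xd_diff: "Xd Zx Zy (F - G) = Xd Zx Zy F - Xd Zx Zy G"
  by (simp add: Xd_def algebra_simps)
lemma Xd_KK_mult: "Xd Zx Zy (KK c * G) = KK c * Xd Zx Zy G"
  by (simp add: Xd_mult) (simp add: Xd_def)
lemma Xd_x2: "Xd Zx Zy x2 = Zx" by (simp add: Xd_def)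
lemma Xd_y2: "Xd Zx Zy y2 = Zy" by (simp add: Xd_def)
lemma dX_0[simp]: "dX 0 = 0" by (rule fps_ext) simp
lemma Xd_0[simp]: "Xd Zx Zy 0 = 0" by (simp add: Xd_def)
lemma Xd_sum: "Xd Zx Zy (sum f S) = (\<Sum>k\<in>S. Xd Zx Zy (f k))"
  by (induction S rule: infinite_finite_induct) (auto simp: Xd_add)

definition ord_ge :: "nat \<Rightarrow> fps2 \<Rightarrow> bool" where
  "ord_ge d F \<longleftrightarrow> (\<forall>i j. i + j < d \<longrightarrow> cf F i j = 0)"

lemma ord_ge_0[simp]: "ord_ge 0 F" by (simp add: ord_ge_def)
lemma ord_ge_zero[simp]: "ord_ge d 0" by (simp add: ord_ge_def)
lemma ord_ge_mono: "ord_ge d F \<Longrightarrow> e \<le> d \<Longrightarrow> ord_ge e F" by (simp add: ord_ge_def)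
lemma ord_ge_add: "ord_ge d F \<Longrightarrow> ord_ge d G \<Longrightarrow> ord_ge d (F + G)" by (simp add: ord_ge_def)
lemma ord_ge_diff: "ord_ge d F \<Longrightarrow> ord_ge d G \<Longrightarrow> ord_ge d (F - G)" by (simp add: ord_ge_def)
lemma ord_ge_uminus: "ord_ge d F \<Longrightarrow> ord_ge d (- F)" by (simp add: ord_ge_def)
lemma ord_ge_KK: "ord_ge d F \<Longrightarrow> ord_ge d (KK c * F)" by (simp add: ord_ge_def)
lemma ord_ge_sum: "(\<And>k. k \<in> S \<Longrightarrow> ord_ge d (f k)) \<Longrightarrow> ord_ge d (sum f S)"
  by (simp add: ord_ge_def cf_sum)
lemma ord_ge_mult: "ord_ge d F \<Longrightarrow> ord_ge e G \<Longrightarrow> ord_ge (d + e) (F * G)"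
  unfolding ord_ge_def cf_mult
proof (intro allI impI)
  fix p q assume F: "\<forall>i j. i + j < d \<longrightarrow> cf F i j = 0" and G: "\<forall>i j. i + j < e \<longrightarrow> cf G i j = 0"
    and pq: "p + q < d + e"
  show "(\<Sum>j\<le>q. \<Sum>i\<le>p. cf F i j * cf G (p - i) (q - j)) = 0"
  proof (intro sum.neutral ballI)
    fix j i assume "j \<in> {..q}" "i \<in> {..p}"
    then show "cf F i j * cf G (p - i) (q - j) = 0"
      using F G pq by (cases "i + j < d") auto
  qed
qed
lemma ord_ge_dX: "ord_ge d F \<Longrightarrow> ord_ge (d - 1) (dX F)" by (simp add: ord_ge_def)
lemma ord_ge_dY: "ord_ge d F \<Longrightarrow> ord_ge (d - 1) (fps_deriv F)" by (simp add: ord_ge_def)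
lemma ord_ge_Xd: assumes "ord_ge 1 Zx" "ord_ge 1 Zy" "ord_ge d F" shows "ord_ge d (Xd Zx Zy F)"
proof (cases d)
  case 0 then show ?thesis by simp
next
  case (Suc e)
  have dF: "ord_ge e (dX F)" using ord_ge_dX[OF assms(3)] Suc by simp
  have dG: "ord_ge e (fps_deriv F)" using ord_ge_dY[OF assms(3)] Suc by simp
  have "ord_ge (1 + e) (Zx * dX F)" "ord_ge (1 + e) (Zy * fps_deriv F)"
    using ord_ge_mult[OF assms(1) dF] ord_ge_mult[OF assms(2) dG] by auto
  then show ?thesis using Suc by (simp add: Xd_def ord_ge_add)
qed
lemma ord_ge_pow: "ord_ge d F \<Longrightarrow> ord_ge (d * k) (F ^ k)"
  by (induction k) (auto dest: ord_ge_mult[of d F])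

lemma approx_mult:
  assumes "ord_ge (Suc d) (F - F0)" "ord_ge e G" "ord_ge d F0" "ord_ge (Suc e) (G - G0)"
  shows "ord_ge (Suc (d + e)) (F * G - F0 * G0)"
proof -
  have "F * G - F0 * G0 = (F - F0) * G + F0 * (G - G0)" by (simp add: algebra_simps)
  moreover have "ord_ge (Suc d + e) ((F - F0) * G)" using assms by (intro ord_ge_mult)
  moreover have "ord_ge (d + Suc e) (F0 * (G - G0))" using assms by (intro ord_ge_mult)
  ultimately show ?thesis by (simp add: ord_ge_add)
qed

lemma dX_one[simp]: "dX 1 = 0" using dX_KK[of 1] by simp
lemma Xd_one[simp]: "Xd Zx Zy 1 = 0" by (simp add: Xd_def)
lemma ord_ge_x2: "ord_ge 1 x2" by (simp add: ord_ge_def)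
lemma ord_ge_y2: "ord_ge 1 y2" by (simp add: ord_ge_def)

locale core =
  fixes a b :: real and m n :: nat and Zx Zy :: fps2
  assumes a: "a > 0" and b: "b > 0" and m: "m > 0" and n: "n > 0" and res: "a * m = b * n"
  and Zx00: "cf Zx 0 0 = 0" and Zx10: "cf Zx 1 0 = a" and Zx01: "cf Zx 0 1 = 0"
  and Zy00: "cf Zy 0 0 = 0" and Zy10: "cf Zy 1 0 = 0" and Zy01: "cf Zy 0 1 = - b"
  and H1: "\<And>p q. p + q + 1 < m + n \<Longrightarrow> cf (Xd Zx Zy Zx) p q = (if p = 1 \<and> q = 0 then a^2 else 0)"
  and H2: "\<And>p q. p + q + 1 < m + n \<Longrightarrow> cf (Xd Zx Zy Zy) p q = (if p = 0 \<and> q = 1 then b^2 else 0)"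
begin

abbreviation "X \<equiv> Xd Zx Zy"
abbreviation "DD \<equiv> m + n"
definition "s = Zx + KK a * x2"
definition "r = Zy - KK b * y2"
definition "r' = Zy + KK b * y2"
definition "E G = X G - KK b * G"
definition "S \<beta> = (\<Sum>i<DD. \<Sum>j<DD. KK (\<beta> i j) * (s ^ i * r ^ j))"

lemma ordZx: "ord_ge 1 Zx" using Zx00 by (simp add: ord_ge_def)
lemma ordZy: "ord_ge 1 Zy" using Zy00 by (simp add: ord_ge_def)

lemma small2: "i + j < 2 \<Longrightarrow> (i = 0 \<and> j = 0) \<or> (i = 1 \<and> j = 0) \<or> (i = 0 \<and> j = (1::nat))"
  by arith

lemma s_approx: "ord_ge 2 (s - KK (2*a) * x2)"
  unfolding ord_ge_def s_def using small2 Zx00 Zx10 Zx01 by fastforce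
lemma ord_s: "ord_ge 1 s"
  unfolding ord_ge_def s_def using Zx00 by simp
lemma r_approx: "ord_ge 2 (r - KK (-2*b) * y2)"
  unfolding ord_ge_def r_def using small2 Zy00 Zy10 Zy01 by fastforce
lemma ord_r: "ord_ge 1 r"
  unfolding ord_ge_def r_def using Zy00 by simp
lemma ord_r': "ord_ge 2 r'"
  unfolding ord_ge_def r'_def using small2 Zy00 Zy10 Zy01 by fastforce

lemma Xs: "ord_ge (DD - 1) (X s - KK a * s)"
proof -
  have "X s = X Zx + KK a * Zx" unfolding s_def Xd_add Xd_KK_mult Xd_x2 ..
  then have "X s - KK a * s = X Zx - KK (a^2) * x2"
    by (simp add: s_def algebra_simps KK_mult power2_eq_square)
  then show ?thesis using H1 by (simp add: ord_ge_def)
qed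

lemma Xr: "ord_ge (DD - 1) (X r - KK (-b) * r)"
proof -
  have "X r = X Zy - KK b * Zy" unfolding r_def Xd_diff Xd_KK_mult Xd_y2 ..
  then have "X r - KK (-b) * r = X Zy - KK (b^2) * y2"
    by (simp add: r_def algebra_simps KK_mult KK_uminus power2_eq_square)
  then show ?thesis using H2 by (simp add: ord_ge_def)
qed

lemma Er': "E r' = X Zy - KK (b^2) * y2"
proof -
  have "X r' = X Zy + KK b * Zy" unfolding r'_def Xd_add Xd_KK_mult Xd_y2 ..
  then show ?thesis by (simp add: E_def r'_def algebra_simps KK_mult power2_eq_square)
qed

lemma DD2: "DD \<ge> 2" using m n by simp

lemma Xpow_s: "\<exists>e. X (s ^ i) = KK (a * i) * s ^ i + e \<and> ord_ge (DD - 2 + i) e"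
proof (induction i)
  case 0 then show ?case by (rule exI[of _ 0]) simp
next
  case (Suc i)
  then obtain e where e: "X (s ^ i) = KK (a * i) * s ^ i + e" "ord_ge (DD - 2 + i) e" by blast
  define e1 where "e1 = X s - KK a * s"
  have Xs': "X s = KK a * s + e1" by (simp add: e1_def)
  have o1: "ord_ge (DD - 1 + 1 * i) (e1 * s ^ i)"
    using ord_ge_mult[OF Xs[folded e1_def] ord_ge_pow[OF ord_s]] .
  have o2: "ord_ge (1 + (DD - 2 + i)) (s * e)" using ord_ge_mult[OF ord_s e(2)] .
  have "X (s ^ Suc i) = KK (a * Suc i) * s ^ Suc i + (e1 * s ^ i + s * e)"
  proof -
    have "KK (a * Suc i) = KK a + KK (a * i)" by (simp add: KK_add[symmetric] algebra_simps)
    then show ?thesis by (simp add: Xd_mult Xs' e(1) algebra_simps)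
  qed
  moreover have "ord_ge (DD - 2 + Suc i) (e1 * s ^ i + s * e)"
    using DD2 o1 o2 by (intro ord_ge_add) (auto elim: ord_ge_mono)
  ultimately show ?case by blast
qed

lemma Xpow_r: "\<exists>e. X (r ^ j) = KK (- b * j) * r ^ j + e \<and> ord_ge (DD - 2 + j) e"
proof (induction j)
  case 0 then show ?case by (rule exI[of _ 0]) simp
next
  case (Suc j)
  then obtain e where e: "X (r ^ j) = KK (- b * j) * r ^ j + e" "ord_ge (DD - 2 + j) e" by blast
  define e1 where "e1 = X r - KK (-b) * r"
  have Xr': "X r = KK (-b) * r + e1" by (simp add: e1_def)
  have o1: "ord_ge (DD - 1 + 1 * j) (e1 * r ^ j)"
    using ord_ge_mult[OF Xr[folded e1_def] ord_ge_pow[OF ord_r]] .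
  have o2: "ord_ge (1 + (DD - 2 + j)) (r * e)" using ord_ge_mult[OF ord_r e(2)] .
  have "X (r ^ Suc j) = KK (- b * Suc j) * r ^ Suc j + (e1 * r ^ j + r * e)"
  proof -
    have "KK (- b * Suc j) = KK (-b) + KK (- b * j)" by (simp add: KK_add[symmetric] algebra_simps)
    then show ?thesis by (simp add: Xd_mult Xr' e(1) algebra_simps)
  qed
  moreover have "ord_ge (DD - 2 + Suc j) (e1 * r ^ j + r * e)"
    using DD2 o1 o2 by (intro ord_ge_add) (auto elim: ord_ge_mono)
  ultimately show ?case by blast
qed

lemma E_mono: assumes "2 \<le> i + j"
  shows "ord_ge DD (E (s ^ i * r ^ j) - KK (a * i - b * j - b) * (s ^ i * r ^ j))"
proof -
  obtain e where e: "X (s ^ i) = KK (a * i) * s ^ i + e" "ord_ge (DD - 2 + i) e"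
    using Xpow_s by blast
  obtain e' where e': "X (r ^ j) = KK (- b * j) * r ^ j + e'" "ord_ge (DD - 2 + j) e'"
    using Xpow_r by blast
  have "E (s ^ i * r ^ j) - KK (a * i - b * j - b) * (s ^ i * r ^ j) = e * r ^ j + s ^ i * e'"
  proof -
    have eq1: "E (s ^ i * r ^ j) = (KK (a * i) + KK (- b * j) - KK b) * (s ^ i * r ^ j) + (e * r ^ j + s ^ i * e')"
      unfolding E_def Xd_mult e(1) e'(1) by (simp add: algebra_simps)
    have "a * i - b * j - b = a * i + (- b * j) - b" by simp
    then have eq2: "KK (a * i - b * j - b) = KK (a * i) + KK (- b * j) - KK b"
      by (simp only: KK_add KK_diff)
    show ?thesis unfolding eq1 eq2 by simp
  qed
  moreover have "ord_ge DD (e * r ^ j)"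
    using ord_ge_mult[OF e(2) ord_ge_pow[OF ord_r, of j]] assms DD2 by (auto elim: ord_ge_mono)
  moreover have "ord_ge DD (s ^ i * e')"
    using ord_ge_mult[OF ord_ge_pow[OF ord_s, of i] e'(2)] assms DD2 by (auto elim: ord_ge_mono)
  ultimately show ?thesis by (simp add: ord_ge_add)
qed

lemma KK_mult_mult: "KK c * F * (KK d * G) = KK (c * d) * (F * G)"
  by (simp add: KK_mult mult_ac)

lemma pow_approx_s: "ord_ge (Suc i) (s ^ i - KK ((2*a)^i) * x2 ^ i)"
proof (induction i)
  case 0 then show ?case by (simp add: ord_ge_def)
next
  case (Suc i)
  have A: "ord_ge (Suc (1 + i)) (s * s ^ i - (KK (2*a) * x2) * (KK ((2*a)^i) * x2 ^ i))"
  proof (rule approx_mult)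
    show "ord_ge (Suc 1) (s - KK (2 * a) * x2)" using s_approx by (simp add: numeral_2_eq_2)
    show "ord_ge i (s ^ i)" using ord_ge_pow[OF ord_s, of i] by simp
    show "ord_ge 1 (KK (2 * a) * x2)" using ord_ge_KK[OF ord_ge_x2] .
    show "ord_ge (Suc i) (s ^ i - KK ((2 * a) ^ i) * x2 ^ i)" by (rule Suc.IH)
  qed
  have eqn: "s ^ Suc i - KK ((2*a)^Suc i) * x2 ^ Suc i = s * s ^ i - (KK (2*a) * x2) * (KK ((2*a)^i) * x2 ^ i)"
    by (simp only: KK_mult_mult power_Suc)
  show ?case unfolding eqn using A by (simp only: Suc_eq_plus1_left[symmetric])
qed

lemma pow_approx_r: "ord_ge (Suc j) (r ^ j - KK ((-2*b)^j) * y2 ^ j)"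
proof (induction j)
  case 0 then show ?case by (simp add: ord_ge_def)
next
  case (Suc j)
  have A: "ord_ge (Suc (1 + j)) (r * r ^ j - (KK (-2*b) * y2) * (KK ((-2*b)^j) * y2 ^ j))"
  proof (rule approx_mult)
    show "ord_ge (Suc 1) (r - KK (-2 * b) * y2)" using r_approx by (simp add: numeral_2_eq_2)
    show "ord_ge j (r ^ j)" using ord_ge_pow[OF ord_r, of j] by simp
    show "ord_ge 1 (KK (-2 * b) * y2)" using ord_ge_KK[OF ord_ge_y2] .
    show "ord_ge (Suc j) (r ^ j - KK ((-2 * b) ^ j) * y2 ^ j)" by (rule Suc.IH)
  qed
  have eqn: "r ^ Suc j - KK ((-2*b)^Suc j) * y2 ^ Suc j = r * r ^ j - (KK (-2*b) * y2) * (KK ((-2*b)^j) * y2 ^ j)"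
    by (simp only: KK_mult_mult power_Suc)
  show ?case unfolding eqn using A by (simp only: Suc_eq_plus1_left[symmetric])
qed

lemma cfSR: assumes "p + q \<le> i + j"
  shows "cf (s ^ i * r ^ j) p q = (if p = i \<and> q = j then (2*a)^i * (-2*b)^j else 0)"
proof -
  have "ord_ge (Suc (i + j)) (s ^ i * r ^ j - (KK ((2*a)^i) * x2 ^ i) * (KK ((-2*b)^j) * y2 ^ j))"
  proof (rule approx_mult)
    show "ord_ge (Suc i) (s ^ i - KK ((2 * a) ^ i) * x2 ^ i)" by (rule pow_approx_s)
    show "ord_ge j (r ^ j)" using ord_ge_pow[OF ord_r, of j] by simp
    show "ord_ge i (KK ((2 * a) ^ i) * x2 ^ i)" using ord_ge_KK[OF ord_ge_pow[OF ord_ge_x2, of i]] by simp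
    show "ord_ge (Suc j) (r ^ j - KK ((-2 * b) ^ j) * y2 ^ j)" by (rule pow_approx_r)
  qed
  moreover have "(KK ((2*a)^i) * x2 ^ i) * (KK ((-2*b)^j) * y2 ^ j) = KK ((2*a)^i * (-2*b)^j) * (x2 ^ i * y2 ^ j)"
    by (rule KK_mult_mult)
  ultimately have "ord_ge (Suc (i + j)) (s ^ i * r ^ j - KK ((2*a)^i * (-2*b)^j) * (x2 ^ i * y2 ^ j))"
    by (simp only:)
  then have "cf (s ^ i * r ^ j) p q = cf (KK ((2*a)^i * (-2*b)^j) * (x2 ^ i * y2 ^ j)) p q"
    using assms unfolding ord_ge_def cf_diff by (metis eq_iff_diff_eq_0 le_imp_less_Suc)
  then show ?thesis by (simp only: cf_mono cf_KK_mult) simp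
qed

lemma cf_S:
  assumes pq: "p + q < DD" and low: "\<And>i j. i + j < p + q \<Longrightarrow> \<gamma> i j = 0"
  shows "cf (S \<gamma>) p q = \<gamma> p q * (2*a)^p * (-2*b)^q"
proof -
  have "cf (S \<gamma>) p q = (\<Sum>i<DD. \<Sum>j<DD. \<gamma> i j * cf (s ^ i * r ^ j) p q)"
    by (simp add: S_def cf_sum)
  also have "\<dots> = (\<Sum>i<DD. \<Sum>j<DD. if i = p then (if j = q then \<gamma> p q * (2*a)^p * (-2*b)^q else 0) else 0)"
  proof (intro sum.cong refl)
    fix i j
    show "\<gamma> i j * cf (s ^ i * r ^ j) p q = (if i = p then (if j = q then \<gamma> p q * (2*a)^p * (-2*b)^q else 0) else 0)"
    proof (cases "i + j < p + q")
      case True then show ?thesis using low by auto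
    next
      case False then show ?thesis by (auto simp: cfSR)
    qed
  qed
  also have "\<dots> = (\<Sum>i<DD. if i = p then \<gamma> p q * (2*a)^p * (-2*b)^q else 0)"
  proof (intro sum.cong refl)
    fix i show "(\<Sum>j<DD. if i = p then (if j = q then \<gamma> p q * (2*a)^p * (-2*b)^q else 0) else 0)
       = (if i = p then \<gamma> p q * (2*a)^p * (-2*b)^q else 0)"
      using pq by (cases "i = p") (simp_all only: if_True if_False sum.delta finite_lessThan, simp_all)
  qed
  also have "\<dots> = \<gamma> p q * (2*a)^p * (-2*b)^q" using pq by (simp only: sum.delta finite_lessThan) simp
  finally show ?thesis .
qed

lemma S_add: "S (\<lambda>i j. \<beta> i j + \<beta>' i j) = S \<beta> + S \<beta>'"
  by (simp add: S_def KK_add distrib_right sum.distrib)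

lemma S_zero: "S (\<lambda>i j. 0) = 0" by (simp add: S_def)

lemma expand_aux:
  "\<forall>d F. DD - d = k \<longrightarrow> ord_ge d F \<longrightarrow>
     (\<exists>\<beta>. (\<forall>i j. \<beta> i j \<noteq> 0 \<longrightarrow> d \<le> i + j \<and> i + j < DD) \<and> ord_ge DD (F - S \<beta>))"
proof (induction k)
  case 0
  show ?case
  proof (intro allI impI)
    fix d F assume "DD - d = 0" "ord_ge d F"
    then show "\<exists>\<beta>. (\<forall>i j. \<beta> i j \<noteq> 0 \<longrightarrow> d \<le> i + j \<and> i + j < DD) \<and> ord_ge DD (F - S \<beta>)"
      by (intro exI[of _ "\<lambda>i j. 0"]) (auto simp: S_zero elim: ord_ge_mono)
  qed
next
  case (Suc k)
  show ?case
  proof (intro allI impI)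
    fix d F assume dk: "DD - d = Suc k" and F: "ord_ge d F"
    define \<beta>0 where "\<beta>0 i j = (if i + j = d then cf F i j / ((2*a)^i * (-2*b)^j) else 0)" for i j
    have nz: "(2*a)^i * (-2*b)^j \<noteq> 0" for i j using a b by simp
    have F': "ord_ge (Suc d) (F - S \<beta>0)"
      unfolding ord_ge_def
    proof (intro allI impI)
      fix p q assume pq: "p + q < Suc d"
      have low: "\<And>i j. i + j < p + q \<Longrightarrow> \<beta>0 i j = 0" using pq by (auto simp: \<beta>0_def)
      have "cf (S \<beta>0) p q = \<beta>0 p q * (2*a)^p * (-2*b)^q"
        using cf_S[OF _ low] pq dk by simp
      then show "cf (F - S \<beta>0) p q = 0"
        using F pq nz[of p q] by (auto simp: \<beta>0_def ord_ge_def)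
    qed
    from Suc.IH F' dk obtain \<beta>' where
      \<beta>': "\<forall>i j. \<beta>' i j \<noteq> 0 \<longrightarrow> Suc d \<le> i + j \<and> i + j < DD" "ord_ge DD (F - S \<beta>0 - S \<beta>')"
      by (metis Suc_diff_Suc diff_Suc_1 zero_less_Suc zero_less_diff)
    define \<beta> where "\<beta> i j = \<beta>0 i j + \<beta>' i j" for i j
    have "S \<beta> = S \<beta>0 + S \<beta>'" unfolding \<beta>_def S_add ..
    then have 1: "ord_ge DD (F - S \<beta>)" using \<beta>'(2) by (simp add: algebra_simps)
    have 2: "\<forall>i j. \<beta> i j \<noteq> 0 \<longrightarrow> d \<le> i + j \<and> i + j < DD"
    proof (intro allI impI)
      fix i j assume "\<beta> i j \<noteq> 0"
      then have "\<beta>0 i j \<noteq> 0 \<or> \<beta>' i j \<noteq> 0" by (auto simp: \<beta>_def)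
      then show "d \<le> i + j \<and> i + j < DD"
      proof
        assume "\<beta>0 i j \<noteq> 0" then show ?thesis using dk by (auto simp: \<beta>0_def split: if_splits)
      next
        assume "\<beta>' i j \<noteq> 0" then show ?thesis using \<beta>'(1) by fastforce
      qed
    qed
    show "\<exists>\<beta>. (\<forall>i j. \<beta> i j \<noteq> 0 \<longrightarrow> d \<le> i + j \<and> i + j < DD) \<and> ord_ge DD (F - S \<beta>)"
      using 1 2 by blast
  qed
qed

lemma expand: "ord_ge d F \<Longrightarrow>
     \<exists>\<beta>. (\<forall>i j. \<beta> i j \<noteq> 0 \<longrightarrow> d \<le> i + j \<and> i + j < DD) \<and> ord_ge DD (F - S \<beta>)"
  using expand_aux by blast

lemma E_sum: "E (sum f A) = (\<Sum>k\<in>A. E (f k))"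
  by (simp add: E_def Xd_sum sum_subtractf sum_distrib_left)
lemma E_KK_mult: "E (KK c * G) = KK c * E G"
  unfolding E_def Xd_KK_mult by (simp add: algebra_simps)
lemma E_diff: "E (F - G) = E F - E G"
  unfolding E_def Xd_diff by (simp add: algebra_simps)

lemma E_S: assumes "\<forall>i j. \<beta> i j \<noteq> 0 \<longrightarrow> 2 \<le> i + j"
  shows "ord_ge DD (E (S \<beta>) - S (\<lambda>i j. \<beta> i j * (a * i - b * j - b)))"
proof -
  have "E (S \<beta>) - S (\<lambda>i j. \<beta> i j * (a * i - b * j - b)) =
    (\<Sum>i<DD. \<Sum>j<DD. KK (\<beta> i j) * E (s ^ i * r ^ j) - KK (\<beta> i j) * (KK (a * i - b * j - b) * (s ^ i * r ^ j)))"
    by (simp only: S_def E_sum E_KK_mult KK_mult mult.assoc sum_subtractf[symmetric])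
  also have "\<dots> = (\<Sum>i<DD. \<Sum>j<DD. KK (\<beta> i j) * (E (s ^ i * r ^ j) - KK (a * i - b * j - b) * (s ^ i * r ^ j)))"
    by (simp only: right_diff_distrib)
  also have "ord_ge DD \<dots>"
  proof (intro ord_ge_sum)
    fix i j
    show "ord_ge DD (KK (\<beta> i j) * (E (s ^ i * r ^ j) - KK (a * i - b * j - b) * (s ^ i * r ^ j)))"
    proof (cases "\<beta> i j = 0")
      case True then show ?thesis by simp
    next
      case False then show ?thesis using assms E_mono ord_ge_KK by blast
    qed
  qed
  finally show ?thesis .
qed

theorem core_main: "cf (X Zy) m (n - 1) = 0"
proof -
  obtain \<beta> where \<beta>: "\<forall>i j. \<beta> i j \<noteq> 0 \<longrightarrow> 2 \<le> i + j \<and> i + j < DD" "ord_ge DD (r' - S \<beta>)"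
    using expand[OF ord_r'] by blast
  define \<gamma> where "\<gamma> i j = \<beta> i j * (a * i - b * j - b)" for i j
  have "ord_ge DD (E (r' - S \<beta>))"
    unfolding E_def by (intro ord_ge_diff ord_ge_Xd ordZx ordZy \<beta>(2) ord_ge_KK)
  moreover have "ord_ge DD (E (S \<beta>) - S \<gamma>)" unfolding \<gamma>_def using \<beta>(1) by (intro E_S) blast
  ultimately have main: "ord_ge DD (E r' - S \<gamma>)"
    by (simp add: E_diff) (metis (no_types, lifting) diff_add_cancel ord_ge_add add_diff_eq)
  have cfE: "cf (S \<gamma>) p q = cf (E r') p q" if "p + q < DD" for p q
    using main that by (simp add: ord_ge_def)
  have low: "\<forall>p q. p + q = d \<longrightarrow> d + 1 < DD \<longrightarrow> \<gamma> p q = 0" for d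
  proof (induction d rule: less_induct)
    case (less d)
    show ?case
    proof (intro allI impI)
      fix p q assume pq: "p + q = d" "d + 1 < DD"
      have l: "\<And>i j. i + j < p + q \<Longrightarrow> \<gamma> i j = 0" using less pq by auto
      have "cf (E r') p q = 0" using H2[of p q] pq by (simp add: Er')
      then have "\<gamma> p q * (2*a)^p * (-2*b)^q = 0" using cf_S[OF _ l] cfE[of p q] pq by simp
      then show "\<gamma> p q = 0" using a b by simp
    qed
  qed
  have g: "\<gamma> m (n - 1) = 0"
    using n res by (simp add: \<gamma>_def of_nat_diff algebra_simps)
  have "cf (S \<gamma>) m (n - 1) = 0"
    using cf_S[of m "n - 1" \<gamma>] low g n by fastforce
  then have "cf (E r') m (n - 1) = 0" using cfE[of m "n - 1"] n by simp
  then show ?thesis using m by (simp add: Er')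
qed

end

lemma dX_dY: "dX (fps_deriv F) = fps_deriv (dX F)"
  by (rule fps2_eqI) (simp add: algebra_simps)

lemma cf_mk_mult: "cf (mk f * mk g) p q = conv2 f g p q"
  by (simp add: cf_mult conv2_def sum.swap[of _ "{..q}"])

lemma formal_part:
  fixes a b c :: real and m n :: nat and zc :: "nat \<Rightarrow> nat \<Rightarrow> real"
  assumes a: "a > 0" and b: "b > 0" and m: "m > 0" and n: "n > 0"
    and res: "real m * a - real n * b = 0" and c: "c \<noteq> 0"
    and low: "\<forall>i j. i + j \<le> 2 \<longrightarrow> zc i j = z_low a b i j"
    and eq: "\<forall>p q. conv2 (fdx zc) (fdx zc) p q + conv2 (fdy zc) (fdy zc) p q
               = (if (p, q) = (m, n) then c else h_low a b p q)"
  shows False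
proof -
  define hc where "hc p q = (if (p, q) = (m, n) then c else h_low a b p q)" for p q
  define Z where "Z = mk zc"
  define Zx where "Zx = mk (fdx zc)"
  define Zy where "Zy = mk (fdy zc)"
  have Zx: "Zx = dX Z" unfolding Zx_def Z_def by (rule fps2_eqI) (simp add: fdx_def)
  have Zy: "Zy = fps_deriv Z" unfolding Zy_def Z_def by (rule fps2_eqI) (simp add: fdy_def)
  have sq: "Zx * Zx + Zy * Zy = mk hc"
    by (rule fps2_eqI) (simp add: Zx_def Zy_def cf_mk_mult eq hc_def)
  have dyx: "dX Zy = fps_deriv Zx" by (simp add: Zx Zy dX_dY)
  have HX: "dX (mk hc) = Xd Zx Zy Zx + Xd Zx Zy Zx"
    unfolding sq[symmetric] by (simp add: dX_mult Xd_def dyx algebra_simps)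
  have HY: "fps_deriv (mk hc) = Xd Zx Zy Zy + Xd Zx Zy Zy"
    unfolding sq[symmetric] by (simp add: fps_deriv_mult Xd_def dyx algebra_simps)
  have cX: "cf (Xd Zx Zy Zx) p q = real (Suc p) * hc (Suc p) q / 2" for p q
  proof -
    have "cf (dX (mk hc)) p q = cf (Xd Zx Zy Zx) p q + cf (Xd Zx Zy Zx) p q" by (simp only: HX cf_add)
    then show ?thesis by simp
  qed
  have cY: "cf (Xd Zx Zy Zy) p q = real (Suc q) * hc p (Suc q) / 2" for p q
  proof -
    have "cf (fps_deriv (mk hc)) p q = cf (Xd Zx Zy Zy) p q + cf (Xd Zx Zy Zy) p q" by (simp only: HY cf_add)
    then show ?thesis by simp
  qed
  have l: "zc 1 0 = 0" "zc 2 0 = a / 2" "zc 1 1 = 0" "zc 0 1 = 0" "zc 0 2 = - b / 2"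
    using low by (auto simp: z_low_def)
  interpret core a b m n Zx Zy
  proof
    show "a * real m = b * real n" using res by (simp add: algebra_simps)
    show "cf Zx 0 0 = 0" "cf Zx 1 0 = a" "cf Zx 0 1 = 0" "cf Zy 0 0 = 0" "cf Zy 1 0 = 0" "cf Zy 0 1 = - b"
      using l by (simp_all add: Zx_def Zy_def fdx_def fdy_def numeral_2_eq_2)
    show "cf (Xd Zx Zy Zx) p q = (if p = 1 \<and> q = 0 then a^2 else 0)" if "p + q + 1 < m + n" for p q
      using that by (auto simp: cX hc_def h_low_def)
    show "cf (Xd Zx Zy Zy) p q = (if p = 0 \<and> q = 1 then b^2 else 0)" if "p + q + 1 < m + n" for p q
      using that by (auto simp: cY hc_def h_low_def)
  qed (use a b m n in auto)
  have "cf (Xd Zx Zy Zy) m (n - 1) = 0" by (rule core_main)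
  moreover have "cf (Xd Zx Zy Zy) m (n - 1) = real n * c / 2"
    using n by (simp add: cY hc_def)
  ultimately show False using n c by simp
qed

definition Dxy :: "nat \<Rightarrow> nat \<Rightarrow> (real \<times> real \<Rightarrow> real) \<Rightarrow> real \<times> real \<Rightarrow> real" where
  "Dxy i j f = (px ^^ i) ((py ^^ j) f)"

lemma px_app: "px f (x, y) = deriv (\<lambda>t. f (t, y)) x" by (simp add: px_def)
lemma py_app: "py f (x, y) = deriv (\<lambda>t. f (x, t)) y" by (simp add: py_def)

lemma slice_open_x: "open U \<Longrightarrow> open {t. (t, y) \<in> U}"
proof -
  assume "open U"
  then have "open ((\<lambda>t. (t, y)) -` U)" by (intro open_vimage) (auto intro!: continuous_intros)
  then show ?thesis by (simp add: vimage_def)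
qed
lemma slice_open_y: "open U \<Longrightarrow> open {t. (x, t) \<in> U}"
proof -
  assume "open U"
  then have "open ((\<lambda>t. (x, t)) -` U)" by (intro open_vimage) (auto intro!: continuous_intros)
  then show ?thesis by (simp add: vimage_def)
qed

lemma diff_at_open: "f differentiable_on U \<Longrightarrow> open U \<Longrightarrow> p \<in> U \<Longrightarrow> f differentiable at p"
  by (metis at_within_open differentiable_on_def)

lemma px_has: assumes "f differentiable_on U" "open U" "(x, y) \<in> U"
  shows "((\<lambda>t. f (t, y)) has_real_derivative px f (x, y)) (at x)"
proof -
  have "f differentiable at (x, y)" using diff_at_open assms by blast
  moreover have "(\<lambda>t. (t, y)) differentiable at x"
    by (rule differentiableI) (auto intro!: derivative_eq_intros)
  ultimately have "f \<circ> (\<lambda>t. (t, y)) differentiable at x"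
    using differentiable_chain_at by fastforce
  then have "(\<lambda>t. f (t, y)) differentiable at x" by (simp add: o_def)
  then show ?thesis unfolding px_app DERIV_deriv_iff_real_differentiable .
qed

lemma py_has: assumes "f differentiable_on U" "open U" "(x, y) \<in> U"
  shows "((\<lambda>t. f (x, t)) has_real_derivative py f (x, y)) (at y)"
proof -
  have "f differentiable at (x, y)" using diff_at_open assms by blast
  moreover have "(\<lambda>t. (x, t)) differentiable at y"
    by (rule differentiableI) (auto intro!: derivative_eq_intros)
  ultimately have "f \<circ> (\<lambda>t. (x, t)) differentiable at y"
    using differentiable_chain_at by fastforce
  then have "(\<lambda>t. f (x, t)) differentiable at y" by (simp add: o_def)
  then show ?thesis unfolding py_app DERIV_deriv_iff_real_differentiable .
qed

lemma px_cong: assumes "open U" "\<And>q. q \<in> U \<Longrightarrow> f q = g q" "p \<in> U"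
  shows "px f p = px g p"
proof -
  obtain x y where p: "p = (x, y)" by (cases p)
  have "\<forall>\<^sub>F t in nhds x. t \<in> {t. (t, y) \<in> U}"
    using assms p by (intro eventually_nhds_in_open slice_open_x) auto
  then have "\<forall>\<^sub>F t in nhds x. f (t, y) = g (t, y)" by eventually_elim (use assms in auto)
  then show ?thesis unfolding p px_app by (rule deriv_cong_ev) simp
qed

lemma py_cong: assumes "open U" "\<And>q. q \<in> U \<Longrightarrow> f q = g q" "p \<in> U"
  shows "py f p = py g p"
proof -
  obtain x y where p: "p = (x, y)" by (cases p)
  have "\<forall>\<^sub>F t in nhds y. t \<in> {t. (x, t) \<in> U}"
    using assms p by (intro eventually_nhds_in_open slice_open_y) auto
  then have "\<forall>\<^sub>F t in nhds y. f (x, t) = g (x, t)" by eventually_elim (use assms in auto)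
  then show ?thesis unfolding p py_app by (rule deriv_cong_ev) simp
qed

lemma pxpow_cong: "open U \<Longrightarrow> (\<And>q. q \<in> U \<Longrightarrow> f q = g q) \<Longrightarrow> p \<in> U \<Longrightarrow> (px ^^ i) f p = (px ^^ i) g p"
  by (induction i arbitrary: p) (auto intro: px_cong)
lemma pypow_cong: "open U \<Longrightarrow> (\<And>q. q \<in> U \<Longrightarrow> f q = g q) \<Longrightarrow> p \<in> U \<Longrightarrow> (py ^^ i) f p = (py ^^ i) g p"
  by (induction i arbitrary: p) (auto intro: py_cong)
lemma Dxy_cong: "open U \<Longrightarrow> (\<And>q. q \<in> U \<Longrightarrow> f q = g q) \<Longrightarrow> p \<in> U \<Longrightarrow> Dxy i j f p = Dxy i j g p"
  unfolding Dxy_def by (rule pxpow_cong) (auto intro: pypow_cong)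

lemma Ck_mono1: "Ck (Suc k) f U \<Longrightarrow> Ck k f U"
proof (induction k arbitrary: f)
  case 0 then show ?case by (simp add: differentiable_imp_continuous_on)
next
  case (Suc k)
  have h: "f differentiable_on U" "Ck (Suc k) (px f) U" "Ck (Suc k) (py f) U"
    using Suc.prems by (simp_all only: Ck.simps)
  show ?case unfolding Ck.simps(2) using h Suc.IH by blast
qed
lemma Ck_mono: "Ck k' f U \<Longrightarrow> k \<le> k' \<Longrightarrow> Ck k f U"
proof (induction k')
  case 0 then show ?case by simp
next
  case (Suc k') then show ?case
    by (cases "k = Suc k'") (auto simp del: Ck.simps simp add: le_Suc_eq dest: Ck_mono1)
qed
lemma Ck_px: "Ck (Suc k) f U \<Longrightarrow> Ck k (px f) U" by simp
lemma Ck_py: "Ck (Suc k) f U \<Longrightarrow> Ck k (py f) U" by simp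
lemma Ck_pxpow: "Ck (i + k) f U \<Longrightarrow> Ck k ((px ^^ i) f) U"
proof (induction i arbitrary: k)
  case 0 then show ?case by simp
next
  case (Suc i)
  have "Ck (Suc k) ((px ^^ i) f) U" using Suc.IH[of "Suc k"] Suc.prems by simp
  then show ?case by (simp only: funpow.simps o_apply Ck_px)
qed
lemma Ck_pypow: "Ck (i + k) f U \<Longrightarrow> Ck k ((py ^^ i) f) U"
proof (induction i arbitrary: k)
  case 0 then show ?case by simp
next
  case (Suc i)
  have "Ck (Suc k) ((py ^^ i) f) U" using Suc.IH[of "Suc k"] Suc.prems by simp
  then show ?case by (simp only: funpow.simps o_apply Ck_py)
qed
lemma Ck_Dxy: "Ck (i + j + k) f U \<Longrightarrow> Ck k (Dxy i j f) U"
  unfolding Dxy_def by (rule Ck_pxpow, rule Ck_pypow) (simp add: add_ac)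
lemma Ck_diff: "Ck (Suc k) f U \<Longrightarrow> f differentiable_on U" by simp
lemma Ck_cont: "Ck k f U \<Longrightarrow> continuous_on U f"
  by (cases k) (simp_all add: differentiable_imp_continuous_on)

lemma px_add: assumes "open U" "f differentiable_on U" "g differentiable_on U" "q \<in> U"
  shows "px (\<lambda>p. f p + g p) q = px f q + px g q"
proof -
  obtain x y where q: "q = (x, y)" by (cases q)
  have "((\<lambda>t. f (t, y) + g (t, y)) has_real_derivative px f (x, y) + px g (x, y)) (at x)"
    by (rule DERIV_add; rule px_has[of _ U]) (use assms q in auto)
  then show ?thesis unfolding q px_app by (rule DERIV_imp_deriv)
qed
lemma py_add: assumes "open U" "f differentiable_on U" "g differentiable_on U" "q \<in> U"
  shows "py (\<lambda>p. f p + g p) q = py f q + py g q"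
proof -
  obtain x y where q: "q = (x, y)" by (cases q)
  have "((\<lambda>t. f (x, t) + g (x, t)) has_real_derivative py f (x, y) + py g (x, y)) (at y)"
    by (rule DERIV_add; rule py_has[of _ U]) (use assms q in auto)
  then show ?thesis unfolding q py_app by (rule DERIV_imp_deriv)
qed
lemma px_mult: assumes "open U" "f differentiable_on U" "g differentiable_on U" "q \<in> U"
  shows "px (\<lambda>p. f p * g p) q = px f q * g q + f q * px g q"
proof -
  obtain x y where q: "q = (x, y)" by (cases q)
  have "((\<lambda>t. f (t, y) * g (t, y)) has_real_derivative f (x, y) * px g (x, y) + px f (x, y) * g (x, y)) (at x)"
    by (rule DERIV_mult'; rule px_has[of _ U]) (use assms q in auto)
  then show ?thesis unfolding q px_app by (simp add: DERIV_imp_deriv algebra_simps)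
qed
lemma py_mult: assumes "open U" "f differentiable_on U" "g differentiable_on U" "q \<in> U"
  shows "py (\<lambda>p. f p * g p) q = py f q * g q + f q * py g q"
proof -
  obtain x y where q: "q = (x, y)" by (cases q)
  have "((\<lambda>t. f (x, t) * g (x, t)) has_real_derivative f (x, y) * py g (x, y) + py f (x, y) * g (x, y)) (at y)"
    by (rule DERIV_mult'; rule py_has[of _ U]) (use assms q in auto)
  then show ?thesis unfolding q py_app by (simp add: DERIV_imp_deriv algebra_simps)
qed
lemma px_const: "px (\<lambda>p. c) q = 0"
  by (cases q) (simp add: px_app)
lemma py_const: "py (\<lambda>p. c) q = 0"
  by (cases q) (simp add: py_app)

lemma Ck_cong: "open U \<Longrightarrow> (\<And>q. q \<in> U \<Longrightarrow> f q = g q) \<Longrightarrow> Ck k f U \<Longrightarrow> Ck k g U"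
proof (induction k arbitrary: f g)
  case 0
  have "continuous_on U f" using "0.prems"(3) by simp
  then have "continuous_on U g" using continuous_on_cong[of U U f g] "0.prems"(2) by simp
  then show ?case by simp
next
  case (Suc k)
  have h: "f differentiable_on U" "Ck k (px f) U" "Ck k (py f) U" using Suc.prems(3) by (simp_all only: Ck.simps)
  have "g differentiable_on U"
    unfolding differentiable_on_def
  proof
    fix p assume p: "p \<in> U"
    have "f differentiable at p within U" using h(1) p by (simp add: differentiable_on_def)
    then show "g differentiable at p within U"
      by (rule differentiable_transform_within[where d=1]) (use p Suc.prems(2) in auto)
  qed
  moreover have "Ck k (px g) U"
    by (rule Suc.IH[OF Suc.prems(1) _ h(2)], rule px_cong[OF Suc.prems(1)]) (use Suc.prems(2) in auto)
  moreover have "Ck k (py g) U"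
    by (rule Suc.IH[OF Suc.prems(1) _ h(3)], rule py_cong[OF Suc.prems(1)]) (use Suc.prems(2) in auto)
  ultimately show ?case by (simp only: Ck.simps)
qed

lemma Ck_const: "Ck k (\<lambda>p. c) U"
proof (induction k arbitrary: c)
  case 0 then show ?case by simp
next
  case (Suc k)
  have "px (\<lambda>p. c) = (\<lambda>p. 0)" "py (\<lambda>p. c) = (\<lambda>p. 0)" by (auto simp: px_const py_const)
  then show ?case using Suc by simp
qed

lemma Ck_add: "open U \<Longrightarrow> Ck k f U \<Longrightarrow> Ck k g U \<Longrightarrow> Ck k (\<lambda>p. f p + g p) U"
proof (induction k arbitrary: f g)
  case 0 then show ?case by (simp add: continuous_on_add)
next
  case (Suc k)
  have f: "f differentiable_on U" "Ck k (px f) U" "Ck k (py f) U" using Suc.prems by simp_all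
  have g: "g differentiable_on U" "Ck k (px g) U" "Ck k (py g) U" using Suc.prems by simp_all
  have "Ck k (px (\<lambda>p. f p + g p)) U"
    by (rule Ck_cong[OF Suc.prems(1) _ Suc.IH[OF Suc.prems(1) f(2) g(2)]]) (rule px_add[symmetric]; use Suc.prems f g in simp)
  moreover have "Ck k (py (\<lambda>p. f p + g p)) U"
    by (rule Ck_cong[OF Suc.prems(1) _ Suc.IH[OF Suc.prems(1) f(3) g(3)]]) (rule py_add[symmetric]; use Suc.prems f g in simp)
  ultimately show ?case using f g by simp
qed

lemma Ck_mult: "open U \<Longrightarrow> Ck k f U \<Longrightarrow> Ck k g U \<Longrightarrow> Ck k (\<lambda>p. f p * g p) U"
proof (induction k arbitrary: f g)
  case 0 then show ?case by (simp add: continuous_on_mult)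
next
  case (Suc k)
  have f: "f differentiable_on U" "Ck k (px f) U" "Ck k (py f) U" "Ck k f U"
    using Suc.prems Ck_mono1[of k f U] by simp_all
  have g: "g differentiable_on U" "Ck k (px g) U" "Ck k (py g) U" "Ck k g U"
    using Suc.prems Ck_mono1[of k g U] by simp_all
  have "Ck k (\<lambda>p. px f p * g p + f p * px g p) U"
    using Suc.IH Suc.prems(1) f g by (intro Ck_add) auto
  then have "Ck k (px (\<lambda>p. f p * g p)) U"
    by (rule Ck_cong[OF Suc.prems(1), rotated]) (rule px_mult[symmetric]; use Suc.prems f g in simp)
  moreover have "Ck k (\<lambda>p. py f p * g p + f p * py g p) U"
    using Suc.IH Suc.prems(1) f g by (intro Ck_add) auto
  then have "Ck k (py (\<lambda>p. f p * g p)) U"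
    by (rule Ck_cong[OF Suc.prems(1), rotated]) (rule py_mult[symmetric]; use Suc.prems f g in simp)
  ultimately show ?case using f g by simp
qed

lemma Ck_cmult: "open U \<Longrightarrow> Ck k f U \<Longrightarrow> Ck k (\<lambda>p. c * f p) U"
  using Ck_mult[OF _ Ck_const] by blast

lemma Ck_sum: "open U \<Longrightarrow> (\<And>l. l \<in> L \<Longrightarrow> Ck k (F l) U) \<Longrightarrow> Ck k (\<lambda>p. \<Sum>l\<in>L. F l p) U"
proof (induction L rule: infinite_finite_induct)
  case (infinite A) then show ?case by (simp add: Ck_const)
next
  case empty then show ?case by (simp add: Ck_const)
next
  case (insert x F) then show ?case by (simp add: Ck_add)
qed

lemma px_eqI: "((\<lambda>t. F (t, y)) has_real_derivative L) (at x) \<Longrightarrow> px F (x, y) = L"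
  by (simp add: px_app DERIV_imp_deriv)
lemma py_eqI: "((\<lambda>t. F (x, t)) has_real_derivative L) (at y) \<Longrightarrow> py F (x, y) = L"
  by (simp add: py_app DERIV_imp_deriv)

lemma Ck2_parts: assumes "Ck 2 f U"
  shows "f differentiable_on U" "px f differentiable_on U" "py f differentiable_on U"
    "continuous_on U (px (py f))" "continuous_on U (py (px f))"
  using assms by (simp_all add: numeral_2_eq_2)

lemma box_dist: "dist (u, v) (x0, y0) \<le> \<bar>u - x0\<bar> + \<bar>v - y0\<bar>"
proof -
  have "dist (u, v) (x0, y0) = norm (u - x0, v - y0)" by (simp add: dist_norm)
  also have "\<dots> \<le> norm (u - x0) + norm (v - y0)" by (rule norm_Pair_le)
  finally show ?thesis by simp
qed

lemma clairaut:
  assumes U: "open U" and f: "Ck 2 f U" and p: "p \<in> U"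
  shows "px (py f) p = py (px f) p"
proof (rule ccontr)
  obtain x0 y0 where p0: "p = (x0, y0)" by (cases p)
  note P = Ck2_parts[OF f]
  define A where "A = px (py f)"
  define B where "B = py (px f)"
  assume ne: "px (py f) p \<noteq> py (px f) p"
  define e where "e = \<bar>A p - B p\<bar> / 2"
  have e: "e > 0" using ne by (simp add: e_def A_def B_def)
  obtain d1 where d1: "d1 > 0" "\<And>q. q \<in> U \<Longrightarrow> dist q p < d1 \<Longrightarrow> dist (A q) (A p) < e"
    using P(4) p e unfolding continuous_on_iff A_def by metis
  obtain d2 where d2: "d2 > 0" "\<And>q. q \<in> U \<Longrightarrow> dist q p < d2 \<Longrightarrow> dist (B q) (B p) < e"
    using P(5) p e unfolding continuous_on_iff B_def by metis
  obtain r where r: "r > 0" "ball p r \<subseteq> U" using U p open_contains_ball by blast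
  define h where "h = min r (min d1 d2) / 3"
  have h: "h > 0" using r d1 d2 by (simp add: h_def)
  have box: "(u, v) \<in> U \<and> dist (A (u, v)) (A p) < e \<and> dist (B (u, v)) (B p) < e"
    if "x0 \<le> u" "u \<le> x0 + h" "y0 \<le> v" "v \<le> y0 + h" for u v
  proof -
    have "dist (u, v) p \<le> \<bar>u - x0\<bar> + \<bar>v - y0\<bar>" using box_dist p0 by simp
    also have "\<dots> \<le> 2 * h" using that by simp
    also have "\<dots> < min r (min d1 d2)" using h unfolding h_def by linarith
    finally have dd: "dist (u, v) p < min r (min d1 d2)" .
    then have inU: "(u, v) \<in> U" using r by (auto simp: dist_commute)
    show ?thesis using inU dd d1 d2 by auto
  qed
  define \<Delta> where "\<Delta> = f (x0 + h, y0 + h) - f (x0 + h, y0) - f (x0, y0 + h) + f (x0, y0)"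
  have "\<exists>\<xi>>x0. \<xi> < x0 + h \<and> (f (x0 + h, y0 + h) - f (x0 + h, y0)) - (f (x0, y0 + h) - f (x0, y0))
      = (x0 + h - x0) * (px f (\<xi>, y0 + h) - px f (\<xi>, y0))"
  proof (rule MVT2[where f = "\<lambda>t. f (t, y0 + h) - f (t, y0)"])
    show "x0 < x0 + h" using h by simp
    fix t assume t: "x0 \<le> t" "t \<le> x0 + h"
    have "(t, y0 + h) \<in> U" "(t, y0) \<in> U" using box[of t "y0 + h"] box[of t y0] t h by auto
    then show "((\<lambda>t. f (t, y0 + h) - f (t, y0)) has_real_derivative px f (t, y0 + h) - px f (t, y0)) (at t)"
      by (intro DERIV_diff px_has[OF P(1) U])
  qed
  then obtain \<xi> where \<xi>: "x0 < \<xi>" "\<xi> < x0 + h"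
    "\<Delta> = h * (px f (\<xi>, y0 + h) - px f (\<xi>, y0))" by (auto simp: \<Delta>_def algebra_simps)
  have "\<exists>\<eta>>y0. \<eta> < y0 + h \<and> px f (\<xi>, y0 + h) - px f (\<xi>, y0) = (y0 + h - y0) * B (\<xi>, \<eta>)"
  proof (rule MVT2[where f = "\<lambda>s. px f (\<xi>, s)"])
    show "y0 < y0 + h" using h by simp
    fix s assume s: "y0 \<le> s" "s \<le> y0 + h"
    have "(\<xi>, s) \<in> U" using box[of \<xi> s] s \<xi> by auto
    then show "((\<lambda>s. px f (\<xi>, s)) has_real_derivative B (\<xi>, s)) (at s)"
      unfolding B_def by (intro py_has[OF P(2) U])
  qed
  then obtain \<eta> where \<eta>: "y0 < \<eta>" "\<eta> < y0 + h" "\<Delta> = h * (h * B (\<xi>, \<eta>))"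
    using \<xi>(3) by auto
  have "\<exists>\<eta>'>y0. \<eta>' < y0 + h \<and> (f (x0 + h, y0 + h) - f (x0, y0 + h)) - (f (x0 + h, y0) - f (x0, y0))
      = (y0 + h - y0) * (py f (x0 + h, \<eta>') - py f (x0, \<eta>'))"
  proof (rule MVT2[where f = "\<lambda>s. f (x0 + h, s) - f (x0, s)"])
    show "y0 < y0 + h" using h by simp
    fix s assume s: "y0 \<le> s" "s \<le> y0 + h"
    have "(x0 + h, s) \<in> U" "(x0, s) \<in> U" using box[of "x0 + h" s] box[of x0 s] s h by auto
    then show "((\<lambda>s. f (x0 + h, s) - f (x0, s)) has_real_derivative py f (x0 + h, s) - py f (x0, s)) (at s)"
      by (intro DERIV_diff py_has[OF P(1) U])
  qed
  then obtain \<eta>' where \<eta>': "y0 < \<eta>'" "\<eta>' < y0 + h"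
    "\<Delta> = h * (py f (x0 + h, \<eta>') - py f (x0, \<eta>'))" by (auto simp: \<Delta>_def algebra_simps)
  have "\<exists>\<xi>'>x0. \<xi>' < x0 + h \<and> py f (x0 + h, \<eta>') - py f (x0, \<eta>') = (x0 + h - x0) * A (\<xi>', \<eta>')"
  proof (rule MVT2[where f = "\<lambda>t. py f (t, \<eta>')"])
    show "x0 < x0 + h" using h by simp
    fix t assume t: "x0 \<le> t" "t \<le> x0 + h"
    have "(t, \<eta>') \<in> U" using box[of t \<eta>'] t \<eta>' by auto
    then show "((\<lambda>t. py f (t, \<eta>')) has_real_derivative A (t, \<eta>')) (at t)"
      unfolding A_def by (intro px_has[OF P(3) U])
  qed
  then obtain \<xi>' where \<xi>': "x0 < \<xi>'" "\<xi>' < x0 + h" "\<Delta> = h * (h * A (\<xi>', \<eta>'))"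
    using \<eta>'(3) by auto
  have "B (\<xi>, \<eta>) = A (\<xi>', \<eta>')" using \<eta>(3) \<xi>'(3) h by simp
  moreover have "dist (B (\<xi>, \<eta>)) (B p) < e" using box[of \<xi> \<eta>] \<xi> \<eta> by auto
  moreover have "dist (A (\<xi>', \<eta>')) (A p) < e" using box[of \<xi>' \<eta>'] \<xi>' \<eta>' by auto
  ultimately have "\<bar>A p - B p\<bar> < 2 * e" by (simp add: dist_real_def)
  then show False by (simp add: e_def)
qed

lemma pypow_px:
  assumes U: "open U" shows "Ck (Suc j) f U \<Longrightarrow> q \<in> U \<Longrightarrow> (py ^^ j) (px f) q = px ((py ^^ j) f) q"
proof (induction j arbitrary: q)
  case 0 then show ?case by simp
next
  case (Suc j)
  have f1: "Ck (Suc j) f U" using Suc.prems(1) Ck_mono1 by blast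
  have "(py ^^ Suc j) (px f) q = py ((py ^^ j) (px f)) q" by simp
  also have "\<dots> = py (px ((py ^^ j) f)) q"
    by (rule py_cong[OF U _ Suc.prems(2)]) (rule Suc.IH[OF f1])
  also have "\<dots> = px (py ((py ^^ j) f)) q"
  proof -
    have "Ck 2 ((py ^^ j) f) U" using Ck_pypow[of j 2 f U] Suc.prems(1) by simp
    then show ?thesis using clairaut[OF U _ Suc.prems(2)] by simp
  qed
  also have "\<dots> = px ((py ^^ Suc j) f) q" by simp
  finally show ?case .
qed

lemma Dxy_Suc_x: "open U \<Longrightarrow> Ck (Suc j) f U \<Longrightarrow> q \<in> U \<Longrightarrow> Dxy (Suc i) j f q = Dxy i j (px f) q"
  unfolding Dxy_def funpow_Suc_right o_apply
  by (rule pxpow_cong[of U]) (auto intro: pypow_px[symmetric])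

lemma Dxy_Suc_y: "Dxy i (Suc j) f = Dxy i j (py f)"
  unfolding Dxy_def funpow_Suc_right o_apply ..

lemma pascal:
  "(\<Sum>k\<le>i. real (i choose k) * (p (Suc k) * q (i - k) + p k * q (Suc (i - k))))
   = (\<Sum>k\<le>Suc i. real (Suc i choose k) * (p k * q (Suc i - k)))" (is "?L = ?R")
proof -
  have R: "?R = p 0 * q (Suc i) + (\<Sum>k\<le>i. real (Suc i choose Suc k) * (p (Suc k) * q (i - k)))"
    by (subst sum.atMost_Suc_shift) simp
  have S: "(\<Sum>k\<le>i. real (Suc i choose Suc k) * (p (Suc k) * q (i - k))) =
      (\<Sum>k\<le>i. real (i choose k) * (p (Suc k) * q (i - k))) + (\<Sum>k\<le>i. real (i choose Suc k) * (p (Suc k) * q (i - k)))"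
    by (simp add: sum.distrib[symmetric] algebra_simps)
  have T1: "(\<Sum>k\<le>Suc i. real (i choose k) * (p k * q (Suc i - k))) = p 0 * q (Suc i) + (\<Sum>k\<le>i. real (i choose Suc k) * (p (Suc k) * q (i - k)))"
    by (subst sum.atMost_Suc_shift) simp
  have T2: "(\<Sum>k\<le>Suc i. real (i choose k) * (p k * q (Suc i - k))) = (\<Sum>k\<le>i. real (i choose k) * (p k * q (Suc (i - k))))"
    by (simp add: Suc_diff_le)
  have L: "?L = (\<Sum>k\<le>i. real (i choose k) * (p (Suc k) * q (i - k))) + (\<Sum>k\<le>i. real (i choose k) * (p k * q (Suc (i - k))))"
    by (simp add: sum.distrib[symmetric] algebra_simps)
  show ?thesis using R S T1 T2 L by simp
qed

lemma leib_step:
  assumes "\<And>k. k \<le> i \<Longrightarrow> ((\<lambda>t. P k t * Q (i - k) t) has_real_derivative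
      (P (Suc k) x * Q (i - k) x + P k x * Q (Suc (i - k)) x)) (at x)"
  shows "((\<lambda>t. \<Sum>k\<le>i. real (i choose k) * (P k t * Q (i - k) t)) has_real_derivative
      (\<Sum>k\<le>Suc i. real (Suc i choose k) * (P k x * Q (Suc i - k) x))) (at x)"
proof -
  have "((\<lambda>t. \<Sum>k\<le>i. real (i choose k) * (P k t * Q (i - k) t)) has_real_derivative
      (\<Sum>k\<le>i. real (i choose k) * (P (Suc k) x * Q (i - k) x + P k x * Q (Suc (i - k)) x))) (at x)"
    by (intro DERIV_sum DERIV_cmult assms) simp
  moreover have eq: "(\<Sum>k\<le>i. real (i choose k) * (P (Suc k) x * Q (i - k) x + P k x * Q (Suc (i - k)) x))
     = (\<Sum>k\<le>Suc i. real (Suc i choose k) * (P k x * Q (Suc i - k) x))"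
    using pascal[of i "\<lambda>k. P k x" "\<lambda>k. Q k x"] by simp
  ultimately show ?thesis by simp
qed

lemma Ck_split: "Ck N f U \<Longrightarrow> k < N \<Longrightarrow> Ck (k + Suc (N - Suc k)) f U"
  by (simp add: Suc_diff_Suc)

lemma pxpow_has: assumes "open U" "Ck N f U" "k < N" "(x, y) \<in> U"
  shows "((\<lambda>t. (px ^^ k) f (t, y)) has_real_derivative (px ^^ Suc k) f (x, y)) (at x)"
proof -
  have "Ck (Suc (N - Suc k)) ((px ^^ k) f) U" using Ck_pxpow[OF Ck_split[OF assms(2,3)]] .
  then have "(px ^^ k) f differentiable_on U" by simp
  from px_has[OF this assms(1,4)] show ?thesis by simp
qed
lemma pypow_has: assumes "open U" "Ck N f U" "k < N" "(x, y) \<in> U"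
  shows "((\<lambda>t. (py ^^ k) f (x, t)) has_real_derivative (py ^^ Suc k) f (x, y)) (at y)"
proof -
  have "Ck (Suc (N - Suc k)) ((py ^^ k) f) U" using Ck_pypow[OF Ck_split[OF assms(2,3)]] .
  then have "(py ^^ k) f differentiable_on U" by simp
  from py_has[OF this assms(1,4)] show ?thesis by simp
qed

lemma DERIV_prod2: "(f has_real_derivative f') (at x) \<Longrightarrow> (g has_real_derivative g') (at x) \<Longrightarrow>
   ((\<lambda>t. f t * g t) has_real_derivative (f' * g x + f x * g')) (at x)"
  by (drule (1) DERIV_mult) (simp add: algebra_simps)

lemma pxpow_leibniz:
  assumes U: "open U" and u: "Ck N u U" and w: "Ck N w U"
  shows "i \<le> N \<Longrightarrow> q \<in> U \<Longrightarrow> (px ^^ i) (\<lambda>p. u p * w p) q =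
    (\<Sum>k\<le>i. real (i choose k) * ((px ^^ k) u q * (px ^^ (i - k)) w q))"
proof (induction i arbitrary: q)
  case 0 then show ?case by simp
next
  case (Suc i)
  obtain x y where q: "q = (x, y)" by (cases q)
  have "(px ^^ Suc i) (\<lambda>p. u p * w p) q = px ((px ^^ i) (\<lambda>p. u p * w p)) q" by simp
  also have "\<dots> = px (\<lambda>p. \<Sum>k\<le>i. real (i choose k) * ((px ^^ k) u p * (px ^^ (i - k)) w p)) q"
    by (rule px_cong[OF U _ Suc.prems(2)]) (use Suc.IH Suc.prems in auto)
  also have "\<dots> = (\<Sum>k\<le>Suc i. real (Suc i choose k) * ((px ^^ k) u q * (px ^^ (Suc i - k)) w q))"
    unfolding q
  proof (rule px_eqI, rule leib_step[where P = "\<lambda>k t. (px ^^ k) u (t, y)" and Q = "\<lambda>k t. (px ^^ k) w (t, y)"])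
    fix k assume k: "k \<le> i"
    have "(x, y) \<in> U" using Suc.prems q by simp
    then show "((\<lambda>t. (px ^^ k) u (t, y) * (px ^^ (i - k)) w (t, y)) has_real_derivative
         (px ^^ Suc k) u (x, y) * (px ^^ (i - k)) w (x, y) + (px ^^ k) u (x, y) * (px ^^ Suc (i - k)) w (x, y)) (at x)"
      using k Suc.prems by (intro DERIV_prod2 pxpow_has[OF U u] pxpow_has[OF U w]) auto
  qed
  finally show ?case .
qed

lemma pypow_leibniz:
  assumes U: "open U" and u: "Ck N u U" and w: "Ck N w U"
  shows "j \<le> N \<Longrightarrow> q \<in> U \<Longrightarrow> (py ^^ j) (\<lambda>p. u p * w p) q =
    (\<Sum>k\<le>j. real (j choose k) * ((py ^^ k) u q * (py ^^ (j - k)) w q))"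
proof (induction j arbitrary: q)
  case 0 then show ?case by simp
next
  case (Suc j)
  obtain x y where q: "q = (x, y)" by (cases q)
  have "(py ^^ Suc j) (\<lambda>p. u p * w p) q = py ((py ^^ j) (\<lambda>p. u p * w p)) q" by simp
  also have "\<dots> = py (\<lambda>p. \<Sum>k\<le>j. real (j choose k) * ((py ^^ k) u p * (py ^^ (j - k)) w p)) q"
    by (rule py_cong[OF U _ Suc.prems(2)]) (use Suc.IH Suc.prems in auto)
  also have "\<dots> = (\<Sum>k\<le>Suc j. real (Suc j choose k) * ((py ^^ k) u q * (py ^^ (Suc j - k)) w q))"
    unfolding q
  proof (rule py_eqI, rule leib_step[where P = "\<lambda>k t. (py ^^ k) u (x, t)" and Q = "\<lambda>k t. (py ^^ k) w (x, t)"])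
    fix k assume k: "k \<le> j"
    have "(x, y) \<in> U" using Suc.prems q by simp
    then show "((\<lambda>t. (py ^^ k) u (x, t) * (py ^^ (j - k)) w (x, t)) has_real_derivative
         (py ^^ Suc k) u (x, y) * (py ^^ (j - k)) w (x, y) + (py ^^ k) u (x, y) * (py ^^ Suc (j - k)) w (x, y)) (at y)"
      using k Suc.prems by (intro DERIV_prod2 pypow_has[OF U u] pypow_has[OF U w]) auto
  qed
  finally show ?case .
qed

lemma pxpow_sum:
  assumes U: "open U" and L: "finite L" and F: "\<And>l. l \<in> L \<Longrightarrow> Ck N (F l) U"
  shows "i \<le> N \<Longrightarrow> q \<in> U \<Longrightarrow> (px ^^ i) (\<lambda>p. \<Sum>l\<in>L. c l * F l p) q = (\<Sum>l\<in>L. c l * (px ^^ i) (F l) q)"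
proof (induction i arbitrary: q)
  case 0 then show ?case by simp
next
  case (Suc i)
  obtain x y where q: "q = (x, y)" by (cases q)
  have "(px ^^ Suc i) (\<lambda>p. \<Sum>l\<in>L. c l * F l p) q = px ((px ^^ i) (\<lambda>p. \<Sum>l\<in>L. c l * F l p)) q" by simp
  also have "\<dots> = px (\<lambda>p. \<Sum>l\<in>L. c l * (px ^^ i) (F l) p) q"
    by (rule px_cong[OF U _ Suc.prems(2)]) (use Suc.IH Suc.prems in auto)
  also have "\<dots> = (\<Sum>l\<in>L. c l * (px ^^ Suc i) (F l) q)"
    unfolding q
  proof (rule px_eqI, intro DERIV_sum DERIV_cmult)
    fix l assume "l \<in> L"
    then show "((\<lambda>t. (px ^^ i) (F l) (t, y)) has_real_derivative (px ^^ Suc i) (F l) (x, y)) (at x)"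
      using Suc.prems q by (intro pxpow_has[OF U F]) auto
  qed
  finally show ?case .
qed

lemma pypow_sum:
  assumes U: "open U" and L: "finite L" and F: "\<And>l. l \<in> L \<Longrightarrow> Ck N (F l) U"
  shows "j \<le> N \<Longrightarrow> q \<in> U \<Longrightarrow> (py ^^ j) (\<lambda>p. \<Sum>l\<in>L. c l * F l p) q = (\<Sum>l\<in>L. c l * (py ^^ j) (F l) q)"
proof (induction j arbitrary: q)
  case 0 then show ?case by simp
next
  case (Suc j)
  obtain x y where q: "q = (x, y)" by (cases q)
  have "(py ^^ Suc j) (\<lambda>p. \<Sum>l\<in>L. c l * F l p) q = py ((py ^^ j) (\<lambda>p. \<Sum>l\<in>L. c l * F l p)) q" by simp
  also have "\<dots> = py (\<lambda>p. \<Sum>l\<in>L. c l * (py ^^ j) (F l) p) q"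
    by (rule py_cong[OF U _ Suc.prems(2)]) (use Suc.IH Suc.prems in auto)
  also have "\<dots> = (\<Sum>l\<in>L. c l * (py ^^ Suc j) (F l) q)"
    unfolding q
  proof (rule py_eqI, intro DERIV_sum DERIV_cmult)
    fix l assume "l \<in> L"
    then show "((\<lambda>t. (py ^^ j) (F l) (x, t)) has_real_derivative (py ^^ Suc j) (F l) (x, y)) (at y)"
      using Suc.prems q by (intro pypow_has[OF U F]) auto
  qed
  finally show ?case .
qed

lemma pxpow_add:
  assumes U: "open U" and f: "Ck N f U" and g: "Ck N g U"
  shows "i \<le> N \<Longrightarrow> q \<in> U \<Longrightarrow> (px ^^ i) (\<lambda>p. f p + g p) q = (px ^^ i) f q + (px ^^ i) g q"
proof (induction i arbitrary: q)
  case 0 then show ?case by simp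
next
  case (Suc i)
  obtain x y where q: "q = (x, y)" by (cases q)
  have "(px ^^ Suc i) (\<lambda>p. f p + g p) q = px ((px ^^ i) (\<lambda>p. f p + g p)) q" by simp
  also have "\<dots> = px (\<lambda>p. (px ^^ i) f p + (px ^^ i) g p) q"
    by (rule px_cong[OF U _ Suc.prems(2)]) (use Suc.IH Suc.prems in auto)
  also have "\<dots> = (px ^^ Suc i) f q + (px ^^ Suc i) g q"
    unfolding q
    by (rule px_eqI, intro DERIV_add pxpow_has[OF U f] pxpow_has[OF U g]) (use Suc.prems q in auto)
  finally show ?case .
qed

lemma pypow_add:
  assumes U: "open U" and f: "Ck N f U" and g: "Ck N g U"
  shows "j \<le> N \<Longrightarrow> q \<in> U \<Longrightarrow> (py ^^ j) (\<lambda>p. f p + g p) q = (py ^^ j) f q + (py ^^ j) g q"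
proof (induction j arbitrary: q)
  case 0 then show ?case by simp
next
  case (Suc j)
  obtain x y where q: "q = (x, y)" by (cases q)
  have "(py ^^ Suc j) (\<lambda>p. f p + g p) q = py ((py ^^ j) (\<lambda>p. f p + g p)) q" by simp
  also have "\<dots> = py (\<lambda>p. (py ^^ j) f p + (py ^^ j) g p) q"
    by (rule py_cong[OF U _ Suc.prems(2)]) (use Suc.IH Suc.prems in auto)
  also have "\<dots> = (py ^^ Suc j) f q + (py ^^ Suc j) g q"
    unfolding q
    by (rule py_eqI, intro DERIV_add pypow_has[OF U f] pypow_has[OF U g]) (use Suc.prems q in auto)
  finally show ?case .
qed

lemma Dxy_add:
  assumes U: "open U" and f: "Ck N f U" and g: "Ck N g U" and ij: "i + j \<le> N" and q: "q \<in> U"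
  shows "Dxy i j (\<lambda>p. f p + g p) q = Dxy i j f q + Dxy i j g q"
proof -
  have "Dxy i j (\<lambda>p. f p + g p) q = (px ^^ i) (\<lambda>p. (py ^^ j) f p + (py ^^ j) g p) q"
    unfolding Dxy_def by (rule pxpow_cong[OF U _ q]) (use pypow_add[OF U f g] ij in auto)
  also have "\<dots> = Dxy i j f q + Dxy i j g q" unfolding Dxy_def
    by (rule pxpow_add[OF U _ _ _ q, of "N - j"]) (use Ck_pypow[of j "N - j"] f g ij in auto)
  finally show ?thesis .
qed

lemma tc_Dxy: "taylor_coeff f i j = Dxy i j f (0, 0) / (fact i * fact j)"
  by (simp add: taylor_coeff_def Dxy_def)

lemma Dxy_leibniz:
  assumes U: "open U" and u: "Ck N u U" and w: "Ck N w U" and ij: "i + j \<le> N" and q: "q \<in> U"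
  shows "Dxy i j (\<lambda>p. u p * w p) q = (\<Sum>l\<le>j. real (j choose l) *
            (\<Sum>k\<le>i. real (i choose k) * (Dxy k l u q * Dxy (i - k) (j - l) w q)))"
proof -
  define F where "F l p = (py ^^ l) u p * (py ^^ (j - l)) w p" for l p
  have FC: "Ck (N - j) (F l) U" if "l \<in> {..j}" for l
  proof -
    have "Ck (N - j) ((py ^^ l) u) U" using Ck_pypow[of l "N - l" u U] u that ij
      by (auto elim: Ck_mono)
    moreover have "Ck (N - j) ((py ^^ (j - l)) w) U" using Ck_pypow[of "j - l" "N - (j - l)" w U] w that ij
      by (auto elim: Ck_mono)
    ultimately show ?thesis unfolding F_def by (rule Ck_mult[OF U])
  qed
  have "Dxy i j (\<lambda>p. u p * w p) q = (px ^^ i) (\<lambda>p. \<Sum>l\<le>j. real (j choose l) * F l p) q"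
    unfolding Dxy_def F_def by (rule pxpow_cong[OF U _ q]) (use pypow_leibniz[OF U u w] ij in auto)
  also have "\<dots> = (\<Sum>l\<le>j. real (j choose l) * (px ^^ i) (F l) q)"
    by (rule pxpow_sum[OF U _ FC _ q]) (use ij in auto)
  also have "\<dots> = (\<Sum>l\<le>j. real (j choose l) *
            (\<Sum>k\<le>i. real (i choose k) * (Dxy k l u q * Dxy (i - k) (j - l) w q)))"
  proof (intro sum.cong refl arg_cong2[where f = "(*)"])
    fix l assume l: "l \<in> {..j}"
    have a: "Ck (N - j) ((py ^^ l) u) U" using Ck_pypow[of l "N - l" u U] u l ij
      by (auto elim: Ck_mono)
    have b: "Ck (N - j) ((py ^^ (j - l)) w) U" using Ck_pypow[of "j - l" "N - (j - l)" w U] w l ij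
      by (auto elim: Ck_mono)
    show "(px ^^ i) (F l) q = (\<Sum>k\<le>i. real (i choose k) * (Dxy k l u q * Dxy (i - k) (j - l) w q))"
      unfolding F_def Dxy_def using pxpow_leibniz[OF U a b _ q] ij by simp
  qed
  finally show ?thesis .
qed

lemma choose_fact_div: "k \<le> i \<Longrightarrow> real (i choose k) / fact i = 1 / (fact k * fact (i - k))"
  by (simp add: binomial_fact)

lemma conv_norm:
  "(\<Sum>l\<le>j. real (j choose l) * (\<Sum>k\<le>i. real (i choose k) * (A k l * B (i - k) (j - l)))) / (fact i * fact j)
   = (\<Sum>l\<le>j. \<Sum>k\<le>i. (A k l / (fact k * fact l)) * (B (i - k) (j - l) / (fact (i - k) * fact (j - l))))"
proof -
  have "(\<Sum>l\<le>j. real (j choose l) * (\<Sum>k\<le>i. real (i choose k) * (A k l * B (i - k) (j - l)))) / (fact i * fact j)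
     = (\<Sum>l\<le>j. \<Sum>k\<le>i. (real (j choose l) / fact j) * (real (i choose k) / fact i) * (A k l * B (i - k) (j - l)))"
    by (simp add: sum_divide_distrib sum_distrib_left sum_distrib_right algebra_simps)
  also have "\<dots> = (\<Sum>l\<le>j. \<Sum>k\<le>i. (A k l / (fact k * fact l)) * (B (i - k) (j - l) / (fact (i - k) * fact (j - l))))"
    by (intro sum.cong refl) (simp add: choose_fact_div field_simps)
  finally show ?thesis .
qed

lemma tc_leibniz:
  assumes U: "open U" and u: "Ck N u U" and w: "Ck N w U" and ij: "i + j \<le> N" and O: "(0, 0) \<in> U"
  shows "taylor_coeff (\<lambda>p. u p * w p) i j = (\<Sum>l\<le>j. \<Sum>k\<le>i. taylor_coeff u k l * taylor_coeff w (i - k) (j - l))"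
  unfolding tc_Dxy Dxy_leibniz[OF U u w ij O] by (rule conv_norm)

lemma deriv_prod_zero:
  assumes "(f has_real_derivative f') (at x)" "f x = 0" "isCont g x"
  shows "((\<lambda>t. f t * g t) has_real_derivative f' * g x) (at x)"
proof -
  obtain d where d: "\<forall>z. f z - f x = d z * (z - x)" "isCont d x" "d x = f'"
    using assms(1) CARAT_DERIV by blast
  show ?thesis unfolding CARAT_DERIV
  proof (intro exI[of _ "\<lambda>z. d z * g z"] conjI allI)
    fix z show "f z * g z - f x * g x = d z * g z * (z - x)" using d(1)[rule_format, of z] assms(2) by simp
  next
    show "isCont (\<lambda>z. d z * g z) x" using d(2) assms(3) by (intro continuous_intros)
  next
    show "d x * g x = f' * g x" using d(3) by simp
  qed
qed

lemma isCont_slice: fixes G :: "real \<times> real \<Rightarrow> real" shows "continuous_on U G \<Longrightarrow> open U \<Longrightarrow> (x, y) \<in> U \<Longrightarrow> isCont (\<lambda>t. G (t, y)) x"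
proof -
  assume "continuous_on U G" "open U" "(x, y) \<in> U"
  then have "isCont G (x, y)" using continuous_on_eq_continuous_at by blast
  moreover have "isCont (\<lambda>t. (t, y)) x" by (intro continuous_intros)
  ultimately show ?thesis using isCont_o2[of x "\<lambda>t. (t, y)" G] by simp
qed

lemma Dxy_has_x: assumes "open U" "Ck N f U" "k + l < N" "(x, y) \<in> U"
  shows "((\<lambda>t. Dxy k l f (t, y)) has_real_derivative Dxy (Suc k) l f (x, y)) (at x)"
  unfolding Dxy_def using pxpow_has[OF assms(1) Ck_pypow[of l "N - l" f U] _ assms(4), of k] assms(2,3)
  by simp

lemma leibniz_top:
  assumes U: "open U" and O: "(0, 0) \<in> U" and u: "Ck (Suc N) u U" and w: "Ck N w U"
    and u0: "u (0, 0) = 0" and ij: "i + j = N"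
  shows "((\<lambda>t. Dxy i j (\<lambda>p. u p * w p) (t, 0)) has_real_derivative
     (\<Sum>l\<le>j. real (j choose l) * (\<Sum>k\<le>Suc i. real (Suc i choose k) * (Dxy k l u (0, 0) * Dxy (Suc i - k) (j - l) w (0, 0))))) (at 0)"
proof -
  have uN: "Ck N u U" using Ck_mono1[OF u] .
  define P where "P l k t = Dxy k l u (t, 0)" for l k t
  define Q where "Q l k t = Dxy k (j - l) w (t, 0)" for l k t
  have S: "open {t. (t, 0::real) \<in> U}" using slice_open_x[OF U] .
  have main: "((\<lambda>t. \<Sum>l\<le>j. real (j choose l) * (\<Sum>k\<le>i. real (i choose k) * (P l k t * Q l (i - k) t)))
     has_real_derivative
     (\<Sum>l\<le>j. real (j choose l) * (\<Sum>k\<le>Suc i. real (Suc i choose k) * (P l k 0 * Q l (Suc i - k) 0)))) (at 0)"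
  proof (intro DERIV_sum DERIV_cmult leib_step)
    fix l k assume l: "l \<in> {..j}" and k: "k \<le> i"
    show "((\<lambda>t. P l k t * Q l (i - k) t) has_real_derivative
          P l (Suc k) 0 * Q l (i - k) 0 + P l k 0 * Q l (Suc (i - k)) 0) (at 0)"
    proof (cases "k = 0 \<and> l = 0")
      case True
      have d1: "((\<lambda>t. P l k t) has_real_derivative P l (Suc k) 0) (at 0)"
        unfolding P_def using Dxy_has_x[OF U u _ O, of k l] k l ij by simp
      have z: "P l k 0 = 0" using True u0 by (simp add: P_def Dxy_def)
      have "Ck 0 (Dxy (i - k) (j - l) w) U" using Ck_Dxy[of "i - k" "j - l" 0 w U] w True ij by simp
      then have c: "isCont (Q l (i - k)) 0" unfolding Q_def using isCont_slice[OF _ U O] by simp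
      show ?thesis using deriv_prod_zero[OF d1 z c] z by simp
    next
      case False
      have d1: "((\<lambda>t. P l k t) has_real_derivative P l (Suc k) 0) (at 0)"
        unfolding P_def using Dxy_has_x[OF U u _ O, of k l] k l ij by simp
      have d2: "((\<lambda>t. Q l (i - k) t) has_real_derivative Q l (Suc (i - k)) 0) (at 0)"
        unfolding Q_def using Dxy_has_x[OF U w _ O, of "i - k" "j - l"] k l ij False by auto
      show ?thesis using DERIV_prod2[OF d1 d2] by simp
    qed
  qed
  have eqU: "Dxy i j (\<lambda>p. u p * w p) (t, 0) =
      (\<Sum>l\<le>j. real (j choose l) * (\<Sum>k\<le>i. real (i choose k) * (P l k t * Q l (i - k) t)))"
    if "t \<in> {t. (t, 0) \<in> U}" for t
    unfolding P_def Q_def using Dxy_leibniz[OF U uN w _, of i j "(t, 0)"] ij that by simp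
  have "((\<lambda>t. Dxy i j (\<lambda>p. u p * w p) (t, 0)) has_real_derivative
     (\<Sum>l\<le>j. real (j choose l) * (\<Sum>k\<le>Suc i. real (Suc i choose k) * (P l k 0 * Q l (Suc i - k) 0)))) (at 0)"
    by (rule has_field_derivative_transform_within_open[OF main S]) (use O eqU in auto)
  moreover have "(\<Sum>l\<le>j. real (j choose l) * (\<Sum>k\<le>Suc i. real (Suc i choose k) * (P l k 0 * Q l (Suc i - k) 0)))
    = (\<Sum>l\<le>j. real (j choose l) * (\<Sum>k\<le>Suc i. real (Suc i choose k) * (Dxy k l u (0, 0) * Dxy (Suc i - k) (j - l) w (0, 0))))"
    by (simp add: P_def Q_def)
  ultimately show ?thesis by simp
qed

definition monf :: "real \<Rightarrow> nat \<Rightarrow> nat \<Rightarrow> real \<times> real \<Rightarrow> real" where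
  "monf C p q = (\<lambda>z. C * fst z ^ p * snd z ^ q)"

fun ff :: "nat \<Rightarrow> nat \<Rightarrow> real" where
  "ff p 0 = 1"
| "ff p (Suc i) = ff p i * real (p - i)"

lemma ff_le: "i \<le> p \<Longrightarrow> ff p i = fact p / fact (p - i)"
proof (induction i)
  case 0 then show ?case by simp
next
  case (Suc i)
  have e: "p - i = Suc (p - Suc i)" using Suc.prems by simp
  have f: "fact (p - i) = real (p - i) * (fact (p - Suc i) :: real)"
    unfolding e by (simp only: fact_Suc of_nat_mult)
  have "ff p (Suc i) = fact p / fact (p - i) * real (p - i)" using Suc by simp
  also have "\<dots> = fact p / fact (p - Suc i)" unfolding f using e by (simp del: of_nat_Suc)
  finally show ?case .
qed
lemma ff_self: "ff p p = fact p" using ff_le[of p p] by simp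
lemma ff_gt: "p < i \<Longrightarrow> ff p i = 0"
proof (induction i)
  case 0 then show ?case by simp
next
  case (Suc i) then show ?case by (cases "p < i") (auto simp: less_Suc_eq)
qed

lemma px_mono: "px (monf C p q) = monf (C * real p) (p - 1) q"
proof
  fix z :: "real \<times> real"
  obtain x y where z: "z = (x, y)" by (cases z)
  have "((\<lambda>t. C * t ^ p * y ^ q) has_real_derivative C * (real p * x ^ (p - Suc 0)) * y ^ q) (at x)"
    by (intro DERIV_cmult_right DERIV_cmult DERIV_pow)
  then show "px (monf C p q) z = monf (C * real p) (p - 1) q z"
    unfolding z by (intro px_eqI) (simp add: monf_def algebra_simps)
qed
lemma py_mono: "py (monf C p q) = monf (C * real q) p (q - 1)"
proof
  fix z :: "real \<times> real"
  obtain x y where z: "z = (x, y)" by (cases z)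
  have "((\<lambda>t. C * x ^ p * t ^ q) has_real_derivative C * x ^ p * (real q * y ^ (q - Suc 0))) (at y)"
    by (intro DERIV_cmult DERIV_pow)
  then show "py (monf C p q) z = monf (C * real q) p (q - 1) z"
    unfolding z by (intro py_eqI) (simp add: monf_def algebra_simps)
qed

lemma mono_diff: "monf C p q differentiable_on U"
  unfolding differentiable_on_def monf_def
proof
  fix x :: "real \<times> real" assume "x \<in> U"
  have fd: "(\<lambda>z::real\<times>real. fst z) differentiable (at x within U)"
    by (rule differentiableI, rule has_derivative_fst[OF has_derivative_ident])
  have sd: "(\<lambda>z::real\<times>real. snd z) differentiable (at x within U)"
    by (rule differentiableI, rule has_derivative_snd[OF has_derivative_ident])
  show "(\<lambda>z. C * fst z ^ p * snd z ^ q) differentiable at x within U"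
    by (intro differentiable_mult differentiable_const differentiable_power fd sd)
qed

lemma Ck_monofn: "Ck k (monf C p q) U"
proof (induction k arbitrary: C p q)
  case 0 then show ?case using differentiable_imp_continuous_on[OF mono_diff] by simp
next
  case (Suc k) then show ?case by (simp add: mono_diff px_mono py_mono)
qed

lemma pypow_mono: "(py ^^ j) (monf C p q) = monf (C * ff q j) p (q - j)"
  by (induction j) (simp_all add: py_mono mult.assoc)
lemma pxpow_mono: "(px ^^ i) (monf C p q) = monf (C * ff p i) (p - i) q"
  by (induction i) (simp_all add: px_mono mult.assoc)
lemma Dxy_mono: "Dxy i j (monf C p q) = monf (C * ff q j * ff p i) (p - i) (q - j)"
  by (simp add: Dxy_def pypow_mono pxpow_mono)

lemma tc_mono: "taylor_coeff (monf C p q) i j = (if i = p \<and> j = q then C else 0)"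
proof -
  have "Dxy i j (monf C p q) (0, 0) = (if i = p \<and> j = q then C * fact p * fact q else 0)"
  proof (cases "i = p \<and> j = q")
    case True then show ?thesis unfolding Dxy_mono by (simp add: monf_def ff_self)
  next
    case False
    then have "p < i \<or> i < p \<or> q < j \<or> j < q" by auto
    then show ?thesis using False unfolding Dxy_mono by (auto simp: monf_def ff_gt)
  qed
  then show ?thesis by (simp add: tc_Dxy)
qed

lemma tc_add_smooth: assumes "\<And>k. Ck k f UNIV" "\<And>k. Ck k g UNIV"
  shows "taylor_coeff (\<lambda>z. f z + g z) i j = taylor_coeff f i j + taylor_coeff g i j"
  unfolding tc_Dxy using Dxy_add[of UNIV "i + j" f g i j "(0,0)"] assms
  by (simp add: add_divide_distrib)

lemma tc_cong: "open U \<Longrightarrow> (0, 0) \<in> U \<Longrightarrow> (\<And>q. q \<in> U \<Longrightarrow> f q = g q) \<Longrightarrow> taylor_coeff f i j = taylor_coeff g i j"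
  unfolding tc_Dxy using Dxy_cong by metis

lemma cancel_aux: "c \<noteq> 0 \<Longrightarrow> c * (X / (c * A)) = X / (A :: real)"
  by (cases "A = 0") (simp_all add: field_simps)
lemma div_Suc_fact: "real (Suc i) * (X / (fact (Suc i) * Y)) = X / (fact i * (Y::real))"
proof -
  have f: "(fact (Suc i) :: real) * Y = real (Suc i) * (fact i * Y)" by (simp only: fact_Suc mult.assoc)
  show ?thesis unfolding f by (rule cancel_aux) simp
qed
lemma div_Suc_fact2: "real (Suc j) * (X / (Y * fact (Suc j))) = X / (Y * fact j :: real)"
  using div_Suc_fact[of j X Y] by (simp add: mult.commute)

lemma cfdX_tc: assumes U: "open U" and O: "(0, 0) \<in> U" and f: "Ck (Suc j) f U"
  shows "cf (dX (mk (taylor_coeff f))) i j = taylor_coeff (px f) i j"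
proof -
  have "cf (dX (mk (taylor_coeff f))) i j = real (Suc i) * (Dxy (Suc i) j f (0,0) / (fact (Suc i) * fact j))"
    by (simp add: tc_Dxy)
  also have "\<dots> = Dxy i j (px f) (0,0) / (fact i * fact j)"
    using Dxy_Suc_x[OF U f O, of i] by (simp only: div_Suc_fact)
  finally show ?thesis by (simp add: tc_Dxy)
qed

lemma cfdY_tc: "cf (fps_deriv (mk (taylor_coeff f))) i j = taylor_coeff (py f) i j"
proof -
  have "cf (fps_deriv (mk (taylor_coeff f))) i j = real (Suc j) * (Dxy i (Suc j) f (0,0) / (fact i * fact (Suc j)))"
    by (simp add: tc_Dxy)
  also have "\<dots> = Dxy i j (py f) (0,0) / (fact i * fact j)"
    by (simp only: Dxy_Suc_y div_Suc_fact2)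
  finally show ?thesis by (simp add: tc_Dxy)
qed

lemma tc_add_U: assumes "open U" "(0, 0) \<in> U" "Ck N f U" "Ck N g U" "i + j \<le> N"
  shows "taylor_coeff (\<lambda>q. f q + g q) i j = taylor_coeff f i j + taylor_coeff g i j"
  unfolding tc_Dxy using Dxy_add[OF assms(1,3,4,5,2)] by (simp add: add_divide_distrib)

lemma tc_poly2: "taylor_coeff (\<lambda>q. monf A p1 q1 q + monf B p2 q2 q) i j =
   (if i = p1 \<and> j = q1 then A else 0) + (if i = p2 \<and> j = q2 then B else 0)"
  by (simp add: tc_add_smooth Ck_monofn tc_mono)

lemma slice_eq_deriv:
  assumes "(f has_real_derivative D) (at y)" "(g has_real_derivative E) (at y)"
    "open S" "y \<in> S" "\<And>t. t \<in> S \<Longrightarrow> f t = g t"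
  shows "D = E"
proof -
  have "(g has_real_derivative D) (at y)"
    by (rule has_field_derivative_transform_within_open[OF assms(1,3,4)]) (use assms(5) in auto)
  then show ?thesis using assms(2) DERIV_unique by blast
qed

lemma Ck_part:
  fixes a b c :: real and m n k :: nat and U :: "(real \<times> real) set" and z :: "real \<times> real \<Rightarrow> real"
  assumes a: "a > 0" and b: "b > 0" and m: "m > 0" and n: "n > 0"
    and res: "real m * a - real n * b = 0" and c: "c \<noteq> 0" and mn4: "m + n \<ge> 4" and kmn: "k \<ge> m + n"
    and U: "open U" and O: "(0, 0) \<in> U" and zk: "Ck k z U"
    and tl: "\<forall>i j. i + j \<le> 2 \<longrightarrow> taylor_coeff z i j = z_low a b i j"
    and eq: "\<forall>p\<in>U. (px z p)^2 + (py z p)^2 = (\<lambda>(x, y). a^2 * x^2 + b^2 * y^2 + c * x^m * y^n) p"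
  shows False
proof -
  define M where "M = m + n - 2"
  have MN: "m + n = Suc (Suc M)" using mn4 by (simp add: M_def)
  have z: "Ck (Suc (Suc M)) z U"
  proof -
    have "Suc (Suc M) \<le> k" using kmn MN by simp
    then show ?thesis by (rule Ck_mono[OF zk])
  qed
  define u1 where "u1 = px z"
  define u2 where "u2 = py z"
  define v1 where "v1 = px (px z)"
  define v2 where "v2 = px (py z)"
  define w1 where "w1 = py (px z)"
  define w2 where "w2 = py (py z)"
  have u1S: "Ck (Suc M) u1 U" and u2S: "Ck (Suc M) u2 U" using z by (simp_all add: u1_def u2_def)
  have u1C: "Ck M u1 U" and u2C: "Ck M u2 U" using u1S u2S Ck_mono1 by blast+
  have v1C: "Ck M v1 U" and v2C: "Ck M v2 U" and w1C: "Ck M w1 U" and w2C: "Ck M w2 U"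
    using u1S u2S by (simp_all add: v1_def v2_def w1_def w2_def u1_def u2_def)
  have z2: "Ck 2 z U" using Ck_mono[OF z] by simp
  have clair: "v2 q = w1 q" if "q \<in> U" for q
    unfolding v2_def w1_def using clairaut[OF U z2 that] .
  have t10: "Dxy 1 0 z (0,0) = 0" using tl[rule_format, of 1 0] by (simp add: tc_Dxy z_low_def)
  have t01: "Dxy 0 1 z (0,0) = 0" using tl[rule_format, of 0 1] by (simp add: tc_Dxy z_low_def)
  have t11: "Dxy 1 1 z (0,0) = 0" using tl[rule_format, of 1 1] by (simp add: tc_Dxy z_low_def)
  have t20: "Dxy 2 0 z (0,0) = a" using tl[rule_format, of 2 0] by (simp add: tc_Dxy z_low_def)
  have t02: "Dxy 0 2 z (0,0) = - b" using tl[rule_format, of 0 2] by (simp add: tc_Dxy z_low_def)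
  have u10: "u1 (0,0) = 0" using t10 by (simp add: Dxy_def u1_def)
  have u20: "u2 (0,0) = 0" using t01 by (simp add: Dxy_def u2_def)
  define Zx where "Zx = mk (taylor_coeff u1)"
  define Zy where "Zy = mk (taylor_coeff u2)"
  have cZx: "cf Zx i j = taylor_coeff u1 i j" for i j by (simp add: Zx_def)
  have cZy: "cf Zy i j = taylor_coeff u2 i j" for i j by (simp add: Zy_def)
  have idY: "u1 q * w1 q + u2 q * w2 q = monf (b^2) 0 1 q + monf (c * n / 2) m (n - 1) q"
    if q: "q \<in> U" for q
  proof -
    obtain x y where qq: "q = (x, y)" by (cases q)
    have d1: "((\<lambda>t. (px z (x, t))^2 + (py z (x, t))^2) has_real_derivative
        2 * u1 q * w1 q + 2 * u2 q * w2 q) (at y)"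
    proof -
      have "((\<lambda>t. px z (x, t)) has_real_derivative w1 q) (at y)"
        unfolding w1_def qq by (rule py_has[of _ U]) (use u1S q qq U in \<open>simp_all add: u1_def\<close>)
      moreover have "((\<lambda>t. py z (x, t)) has_real_derivative w2 q) (at y)"
        unfolding w2_def qq by (rule py_has[of _ U]) (use u2S q qq U in \<open>simp_all add: u2_def\<close>)
      ultimately have "((\<lambda>t. px z (x, t) * px z (x, t) + py z (x, t) * py z (x, t)) has_real_derivative
          (w1 q * px z (x, y) + w1 q * px z (x, y)) + (w2 q * py z (x, y) + w2 q * py z (x, y))) (at y)"
        by (intro DERIV_add DERIV_mult)
      then show ?thesis by (simp add: u1_def u2_def qq algebra_simps power2_eq_square)
    qed
    have d2: "((\<lambda>t. a^2 * x^2 + b^2 * t^2 + c * x^m * t^n) has_real_derivative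
        b^2 * (2 * y) + c * x^m * (real n * y ^ (n - Suc 0))) (at y)"
      by (auto intro!: derivative_eq_intros)
    have "b^2 * (2 * y) + c * x^m * (real n * y ^ (n - Suc 0)) = 2 * u1 q * w1 q + 2 * u2 q * w2 q"
      by (rule slice_eq_deriv[OF d2 d1 slice_open_y[OF U]]) (use eq q qq in auto)
    then show ?thesis by (simp add: monf_def qq algebra_simps)
  qed
  have idX: "u1 q * v1 q + u2 q * v2 q = monf (a^2) 1 0 q + monf (c * m / 2) (m - 1) n q"
    if q: "q \<in> U" for q
  proof -
    obtain x y where qq: "q = (x, y)" by (cases q)
    have d1: "((\<lambda>t. (px z (t, y))^2 + (py z (t, y))^2) has_real_derivative
        2 * u1 q * v1 q + 2 * u2 q * v2 q) (at x)"
    proof -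
      have "((\<lambda>t. px z (t, y)) has_real_derivative v1 q) (at x)"
        unfolding v1_def qq by (rule px_has[of _ U]) (use u1S q qq U in \<open>simp_all add: u1_def\<close>)
      moreover have "((\<lambda>t. py z (t, y)) has_real_derivative v2 q) (at x)"
        unfolding v2_def qq by (rule px_has[of _ U]) (use u2S q qq U in \<open>simp_all add: u2_def\<close>)
      ultimately have "((\<lambda>t. px z (t, y) * px z (t, y) + py z (t, y) * py z (t, y)) has_real_derivative
          (v1 q * px z (x, y) + v1 q * px z (x, y)) + (v2 q * py z (x, y) + v2 q * py z (x, y))) (at x)"
        by (intro DERIV_add DERIV_mult)
      then show ?thesis by (simp add: u1_def u2_def qq algebra_simps power2_eq_square)
    qed
    have d2: "((\<lambda>t. a^2 * t^2 + b^2 * y^2 + c * t^m * y^n) has_real_derivative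
        a^2 * (2 * x) + c * (real m * x ^ (m - Suc 0)) * y^n) (at x)"
      by (auto intro!: derivative_eq_intros)
    have "a^2 * (2 * x) + c * (real m * x ^ (m - Suc 0)) * y^n = 2 * u1 q * v1 q + 2 * u2 q * v2 q"
      by (rule slice_eq_deriv[OF d2 d1 slice_open_x[OF U]]) (use eq q qq in auto)
    then show ?thesis by (simp add: monf_def qq algebra_simps)
  qed
  define PX where "PX = (\<lambda>q. monf (a^2) 1 0 q + monf (c * m / 2) (m - 1) n q)"
  define PY where "PY = (\<lambda>q. monf (b^2) 0 1 q + monf (c * n / 2) m (n - 1) q)"
  have u1w1C: "Ck M (\<lambda>q. u1 q * w1 q) U" using Ck_mult[OF U u1C w1C] .
  have u2w2C: "Ck M (\<lambda>q. u2 q * w2 q) U" using Ck_mult[OF U u2C w2C] .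
  have u1v1C: "Ck M (\<lambda>q. u1 q * v1 q) U" using Ck_mult[OF U u1C v1C] .
  have u2v2C: "Ck M (\<lambda>q. u2 q * v2 q) U" using Ck_mult[OF U u2C v2C] .
  have w10: "w1 (0,0) = 0" using clair[OF O] t11 by (simp add: v2_def Dxy_def)
  have cZx00: "cf Zx 0 0 = 0" by (simp add: cZx tc_Dxy Dxy_def u10)
  have cZx10: "cf Zx 1 0 = a" using t20 by (simp add: cZx tc_Dxy Dxy_def u1_def numeral_2_eq_2)
  have cZx01: "cf Zx 0 1 = 0" using w10 by (simp add: cZx tc_Dxy Dxy_def u1_def w1_def)
  have cZy00: "cf Zy 0 0 = 0" by (simp add: cZy tc_Dxy Dxy_def u20)
  have cZy10: "cf Zy 1 0 = 0" using t11 by (simp add: cZy tc_Dxy Dxy_def u2_def)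
  have cZy01: "cf Zy 0 1 = - b" using t02 by (simp add: cZy tc_Dxy Dxy_def u2_def numeral_2_eq_2)
  have TV: "taylor_coeff v2 i j = taylor_coeff w1 i j" for i j
    by (rule tc_cong[OF U O]) (rule clair)
  have R1: "cf (dX Zx) i j = taylor_coeff v1 i j" if "i + j \<le> M" for i j
  proof -
    have "Ck (Suc j) u1 U" by (rule Ck_mono[OF u1S]) (use that in simp)
    then show ?thesis unfolding Zx_def v1_def u1_def[symmetric] by (rule cfdX_tc[OF U O])
  qed
  have R2: "cf (fps_deriv Zx) i j = taylor_coeff w1 i j" for i j
    unfolding Zx_def w1_def u1_def[symmetric] by (rule cfdY_tc)
  have R3: "cf (dX Zy) i j = taylor_coeff w1 i j" if "i + j \<le> M" for i j
  proof -
    have "Ck (Suc j) u2 U" by (rule Ck_mono[OF u2S]) (use that in simp)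
    then have "cf (dX Zy) i j = taylor_coeff v2 i j" unfolding Zy_def v2_def u2_def[symmetric] by (rule cfdX_tc[OF U O])
    then show ?thesis using TV by simp
  qed
  have R4: "cf (fps_deriv Zy) i j = taylor_coeff w2 i j" for i j
    unfolding Zy_def w2_def u2_def[symmetric] by (rule cfdY_tc)
  have H1: "cf (Xd Zx Zy Zx) p q = (if p = 1 \<and> q = 0 then a^2 else 0)" if pq0: "p + q + 1 < m + n" for p q
  proof -
    have pq: "p + q \<le> M" using pq0 MN by simp
    have A: "cf (Zx * dX Zx) p q = taylor_coeff (\<lambda>q. u1 q * v1 q) p q"
      unfolding tc_leibniz[OF U u1C v1C pq O] cf_mult cZx
    proof (intro sum.cong refl)
      fix l k assume "l \<in> {..q}" "k \<in> {..p}"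
      then show "taylor_coeff u1 k l * cf (dX Zx) (p - k) (q - l) = taylor_coeff u1 k l * taylor_coeff v1 (p - k) (q - l)"
        using R1[of "p - k" "q - l"] pq by (simp del: cf_dX)
    qed
    have B: "cf (Zy * fps_deriv Zx) p q = taylor_coeff (\<lambda>q. u2 q * v2 q) p q"
      unfolding tc_leibniz[OF U u2C v2C pq O] cf_mult cZy
      by (simp only: R2 TV)
    have "cf (Xd Zx Zy Zx) p q = taylor_coeff (\<lambda>q. u1 q * v1 q + u2 q * v2 q) p q"
      unfolding Xd_def cf_add A B tc_add_U[OF U O u1v1C u2v2C pq] ..
    also have "\<dots> = taylor_coeff PX p q" unfolding PX_def by (rule tc_cong[OF U O idX])
    also have "\<dots> = (if p = 1 \<and> q = 0 then a^2 else 0)"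
      unfolding PX_def tc_poly2 using pq MN by auto
    finally show ?thesis .
  qed
  have H2: "cf (Xd Zx Zy Zy) p q = (if p = 0 \<and> q = 1 then b^2 else 0)" if pq0: "p + q + 1 < m + n" for p q
  proof -
    have pq: "p + q \<le> M" using pq0 MN by simp
    have A: "cf (Zx * dX Zy) p q = taylor_coeff (\<lambda>q. u1 q * w1 q) p q"
      unfolding tc_leibniz[OF U u1C w1C pq O] cf_mult cZx
    proof (intro sum.cong refl)
      fix l k assume "l \<in> {..q}" "k \<in> {..p}"
      then show "taylor_coeff u1 k l * cf (dX Zy) (p - k) (q - l) = taylor_coeff u1 k l * taylor_coeff w1 (p - k) (q - l)"
        using R3[of "p - k" "q - l"] pq by (simp del: cf_dX)
    qed
    have B: "cf (Zy * fps_deriv Zy) p q = taylor_coeff (\<lambda>q. u2 q * w2 q) p q"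
      unfolding tc_leibniz[OF U u2C w2C pq O] cf_mult cZy
      by (simp only: R4)
    have "cf (Xd Zx Zy Zy) p q = taylor_coeff (\<lambda>q. u1 q * w1 q + u2 q * w2 q) p q"
      unfolding Xd_def cf_add A B tc_add_U[OF U O u1w1C u2w2C pq] ..
    also have "\<dots> = taylor_coeff PY p q" unfolding PY_def by (rule tc_cong[OF U O idY])
    also have "\<dots> = (if p = 0 \<and> q = 1 then b^2 else 0)"
      unfolding PY_def tc_poly2 using pq MN by auto
    finally show ?thesis .
  qed
  interpret core a b m n Zx Zy
  proof
    show "a * real m = b * real n" using res by (simp add: algebra_simps)
  qed (use a b m n cZx00 cZx10 cZx01 cZy00 cZy10 cZy01 H1 H2 in auto)
  have zero: "cf (Xd Zx Zy Zy) m (n - 1) = 0" by (rule core_main)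
  define S1 where "S1 = (\<Sum>l\<le>n - 1. \<Sum>k\<le>m. taylor_coeff u1 k l * taylor_coeff w1 (m - k) (n - 1 - l))"
  define S2 where "S2 = (\<Sum>l\<le>n - 1. \<Sum>k\<le>m. taylor_coeff u2 k l * taylor_coeff w2 (m - k) (n - 1 - l))"
  have tu10: "taylor_coeff u1 0 0 = 0" using cZx00 cZx by simp
  have top: "cf (Xd Zx Zy Zy) m (n - 1) = S1 + S2"
  proof -
    have A: "cf (Zx * dX Zy) m (n - 1) = S1"
      unfolding S1_def cf_mult cZx
    proof (intro sum.cong refl)
      fix l k assume l: "l \<in> {..n - 1}" and k: "k \<in> {..m}"
      show "taylor_coeff u1 k l * cf (dX Zy) (m - k) (n - 1 - l) = taylor_coeff u1 k l * taylor_coeff w1 (m - k) (n - 1 - l)"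
      proof (cases "k = 0 \<and> l = 0")
        case True then show ?thesis using tu10 by simp
      next
        case False
        have "l \<le> n - 1" "k \<le> m" using l k by auto
        then have "m - k + (n - 1 - l) \<le> M" using False MN n by (simp add: M_def) arith
        then show ?thesis using R3 by (simp del: cf_dX)
      qed
    qed
    have B: "cf (Zy * fps_deriv Zy) m (n - 1) = S2"
      unfolding S2_def cf_mult cZy R4 ..
    show ?thesis unfolding Xd_def cf_add A B ..
  qed
  have mm: "Suc (m - 1) = m" using m by simp
  have ij: "m - 1 + (n - 1) = M" using MN m n by simp
  define V1 where "V1 = (\<Sum>l\<le>n - 1. real (n - 1 choose l) * (\<Sum>k\<le>m. real (m choose k) * (Dxy k l u1 (0, 0) * Dxy (m - k) (n - 1 - l) w1 (0, 0))))"
  define V2 where "V2 = (\<Sum>l\<le>n - 1. real (n - 1 choose l) * (\<Sum>k\<le>m. real (m choose k) * (Dxy k l u2 (0, 0) * Dxy (m - k) (n - 1 - l) w2 (0, 0))))"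
  have D1: "((\<lambda>t. Dxy (m - 1) (n - 1) (\<lambda>p. u1 p * w1 p) (t, 0)) has_real_derivative V1) (at 0)"
    using leibniz_top[OF U O u1S w1C u10 ij] unfolding V1_def mm .
  have D2: "((\<lambda>t. Dxy (m - 1) (n - 1) (\<lambda>p. u2 p * w2 p) (t, 0)) has_real_derivative V2) (at 0)"
    using leibniz_top[OF U O u2S w2C u20 ij] unfolding V2_def mm .
  have V1S: "V1 / (fact m * fact (n - 1)) = S1"
    unfolding V1_def S1_def tc_Dxy by (rule conv_norm)
  have V2S: "V2 / (fact m * fact (n - 1)) = S2"
    unfolding V2_def S2_def tc_Dxy by (rule conv_norm)
  have So: "open {t. (t, 0::real) \<in> U}" by (rule slice_open_x[OF U])
  have eqS: "Dxy (m - 1) (n - 1) (\<lambda>p. u1 p * w1 p) (t, 0) + Dxy (m - 1) (n - 1) (\<lambda>p. u2 p * w2 p) (t, 0)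
        = Dxy (m - 1) (n - 1) PY (t, 0)" if t: "t \<in> {t. (t, 0::real) \<in> U}" for t
  proof -
    have "Dxy (m - 1) (n - 1) PY (t, 0) = Dxy (m - 1) (n - 1) (\<lambda>q. u1 q * w1 q + u2 q * w2 q) (t, 0)"
      unfolding PY_def using t by (intro Dxy_cong[OF U]) (auto simp: idY)
    also have "\<dots> = Dxy (m - 1) (n - 1) (\<lambda>p. u1 p * w1 p) (t, 0) + Dxy (m - 1) (n - 1) (\<lambda>p. u2 p * w2 p) (t, 0)"
      using Dxy_add[OF U u1w1C u2w2C _, of "m - 1" "n - 1" "(t, 0)"] ij t by simp
    finally show ?thesis by simp
  qed
  have DP: "((\<lambda>t. Dxy (m - 1) (n - 1) PY (t, 0)) has_real_derivative V1 + V2) (at 0)"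
    by (rule has_field_derivative_transform_within_open[OF DERIV_add[OF D1 D2] So _ eqS]) (use O in simp)
  have "Dxy m (n - 1) PY (0, 0) = px (Dxy (m - 1) (n - 1) PY) (0, 0)"
    by (subst mm[symmetric]) (simp add: Dxy_def)
  also have "\<dots> = V1 + V2" by (rule px_eqI[OF DP])
  finally have "taylor_coeff PY m (n - 1) = S1 + S2"
    using V1S V2S by (simp add: tc_Dxy add_divide_distrib)
  moreover have "taylor_coeff PY m (n - 1) = c * n / 2"
    unfolding PY_def tc_poly2 using m by simp
  moreover have "S1 + S2 = 0" using top zero by simp
  ultimately have "c * n / 2 = 0" by linarith
  then show False using c n by simp
qed

lemma exists_mn:
  fixes a b :: real
  assumes a: "a > 0" and b: "b > 0"
    and dep: "\<exists>p q :: rat. (p, q) \<noteq> (0, 0) \<and> of_rat p * a + of_rat q * b = 0"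
  shows "\<exists>m n :: nat. m > 0 \<and> n > 0 \<and> real m * a - real n * b = 0 \<and> m + n \<ge> 4"
proof -
  obtain p q :: rat where pq: "(p, q) \<noteq> (0, 0)" "of_rat p * a + of_rat q * b = 0" using dep by blast
  have p0: "p \<noteq> 0"
  proof
    assume "p = 0" then have "of_rat q * b = 0" using pq by simp
    then have "q = 0" using b by simp
    then show False using pq \<open>p = 0\<close> by simp
  qed
  define r where "r = - q / p"
  have ar: "a = of_rat r * b"
  proof -
    have "of_rat p * a = - of_rat q * b" using pq by (simp add: algebra_simps)
    then have "a = - of_rat q * b / of_rat p" using p0 by (simp add: field_simps)
    then show ?thesis by (simp add: r_def of_rat_divide of_rat_minus)
  qed
  have rpos: "of_rat r > (0::real)"
  proof -
    have "of_rat r * b > 0" using ar a by simp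
    then show ?thesis using b by (simp add: zero_less_mult_iff)
  qed
  obtain s1 s2 where qr: "quotient_of r = (s1, s2)" by (cases "quotient_of r")
  have s2: "s2 > 0" using quotient_of_denom_pos[OF qr] .
  have rr: "r = of_int s1 / of_int s2" using quotient_of_div[OF qr] .
  have rreal: "(of_rat r :: real) = of_int s1 / of_int s2"
    unfolding rr by (simp add: of_rat_divide)
  have s1: "s1 > 0"
  proof -
    have "(of_int s1 :: real) / of_int s2 > 0" using rpos rreal by simp
    then show ?thesis using s2 by (simp add: zero_less_divide_iff)
  qed
  have key: "real_of_int s2 * a = real_of_int s1 * b"
    using ar rreal s2 by (simp add: field_simps)
  define m where "m = 4 * nat s2"
  define n where "n = 4 * nat s1"
  have "real m * a - real n * b = 0"
    using key s1 s2 by (simp add: m_def n_def algebra_simps)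
  moreover have "m > 0" "n > 0" "m + n \<ge> 4" using s1 s2 by (auto simp: m_def n_def)
  ultimately show ?thesis by blast
qed

theorem theorem4p4:
  fixes a b :: real
  assumes "a > 0" and "b > 0"
    and "\<exists>p q :: rat. (p, q) \<noteq> (0, 0) \<and> of_rat p * a + of_rat q * b = 0"
  shows "(\<exists>h. smooth_on h UNIV
            \<and> (\<forall>i j. i + j \<le> 2 \<longrightarrow> taylor_coeff h i j = h_low a b i j)
            \<and> \<not> (\<exists>U z. open U \<and> (0, 0) \<in> U \<and> smooth_on z U
                   \<and> (\<forall>i j. i + j \<le> 2 \<longrightarrow> taylor_coeff z i j = z_low a b i j)
                   \<and> (\<forall>p\<in>U. (px z p)^2 + (py z p)^2 = h p)))
       \<and> (\<forall>(m::nat) (n::nat) (c::real).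
            m > 0 \<longrightarrow> n > 0 \<longrightarrow> real m * a - real n * b = 0 \<longrightarrow> m + n \<ge> 4 \<longrightarrow> c \<noteq> 0 \<longrightarrow>
            (let h = (\<lambda>(x, y). a^2 * x^2 + b^2 * y^2 + c * x^m * y^n);
                 hc = (\<lambda>i j. if (i, j) = (m, n) then c else h_low a b i j)
             in \<not> (\<exists>zc. (\<forall>i j. i + j \<le> 2 \<longrightarrow> zc i j = z_low a b i j)
                       \<and> (\<forall>p q. conv2 (fdx zc) (fdx zc) p q + conv2 (fdy zc) (fdy zc) p q = hc p q))
                \<and> (\<forall>k. k \<ge> m + n \<longrightarrow>
                     \<not> (\<exists>U z. open U \<and> (0, 0) \<in> U \<and> Ck k z U
                          \<and> (\<forall>i j. i + j \<le> 2 \<longrightarrow> taylor_coeff z i j = z_low a b i j)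
                          \<and> (\<forall>p\<in>U. (px z p)^2 + (py z p)^2 = h p)))))"
proof -
  note a = assms(1) and b = assms(2)
  have part2: "\<forall>(m::nat) (n::nat) (c::real).
            m > 0 \<longrightarrow> n > 0 \<longrightarrow> real m * a - real n * b = 0 \<longrightarrow> m + n \<ge> 4 \<longrightarrow> c \<noteq> 0 \<longrightarrow>
            (let h = (\<lambda>(x, y). a^2 * x^2 + b^2 * y^2 + c * x^m * y^n);
                 hc = (\<lambda>i j. if (i, j) = (m, n) then c else h_low a b i j)
             in \<not> (\<exists>zc. (\<forall>i j. i + j \<le> 2 \<longrightarrow> zc i j = z_low a b i j)
                       \<and> (\<forall>p q. conv2 (fdx zc) (fdx zc) p q + conv2 (fdy zc) (fdy zc) p q = hc p q))
                \<and> (\<forall>k. k \<ge> m + n \<longrightarrow>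
                     \<not> (\<exists>U z. open U \<and> (0, 0) \<in> U \<and> Ck k z U
                          \<and> (\<forall>i j. i + j \<le> 2 \<longrightarrow> taylor_coeff z i j = z_low a b i j)
                          \<and> (\<forall>p\<in>U. (px z p)^2 + (py z p)^2 = h p))))"
  proof (intro allI impI)
    fix m n :: nat and c :: real
    assume m: "m > 0" and n: "n > 0" and res: "real m * a - real n * b = 0" and mn: "m + n \<ge> 4" and c: "c \<noteq> 0"
    show "let h = (\<lambda>(x, y). a^2 * x^2 + b^2 * y^2 + c * x^m * y^n);
                 hc = (\<lambda>i j. if (i, j) = (m, n) then c else h_low a b i j)
             in \<not> (\<exists>zc. (\<forall>i j. i + j \<le> 2 \<longrightarrow> zc i j = z_low a b i j)
                       \<and> (\<forall>p q. conv2 (fdx zc) (fdx zc) p q + conv2 (fdy zc) (fdy zc) p q = hc p q))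
                \<and> (\<forall>k. k \<ge> m + n \<longrightarrow>
                     \<not> (\<exists>U z. open U \<and> (0, 0) \<in> U \<and> Ck k z U
                          \<and> (\<forall>i j. i + j \<le> 2 \<longrightarrow> taylor_coeff z i j = z_low a b i j)
                          \<and> (\<forall>p\<in>U. (px z p)^2 + (py z p)^2 = h p)))"
      unfolding Let_def
    proof (intro conjI allI impI notI)
      assume "\<exists>zc. (\<forall>i j. i + j \<le> 2 \<longrightarrow> zc i j = z_low a b i j)
                \<and> (\<forall>p q. conv2 (fdx zc) (fdx zc) p q + conv2 (fdy zc) (fdy zc) p q
                   = (if (p, q) = (m, n) then c else h_low a b p q))"
      then obtain zc where "\<forall>i j. i + j \<le> 2 \<longrightarrow> zc i j = z_low a b i j"
        "\<forall>p q. conv2 (fdx zc) (fdx zc) p q + conv2 (fdy zc) (fdy zc) p q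
                   = (if (p, q) = (m, n) then c else h_low a b p q)" by blast
      then show False using formal_part[OF a b m n res c] by blast
    next
      fix k assume k: "m + n \<le> k"
      assume "\<exists>U z. open U \<and> (0, 0) \<in> U \<and> Ck k z U
                          \<and> (\<forall>i j. i + j \<le> 2 \<longrightarrow> taylor_coeff z i j = z_low a b i j)
                          \<and> (\<forall>p\<in>U. (px z p)^2 + (py z p)^2 = (\<lambda>(x, y). a^2 * x^2 + b^2 * y^2 + c * x^m * y^n) p)"
      then obtain U z where "open U" "(0, 0) \<in> U" "Ck k z U"
          "\<forall>i j. i + j \<le> 2 \<longrightarrow> taylor_coeff z i j = z_low a b i j"
          "\<forall>p\<in>U. (px z p)^2 + (py z p)^2 = (\<lambda>(x, y). a^2 * x^2 + b^2 * y^2 + c * x^m * y^n) p"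
        by blast
      then show False using Ck_part[OF a b m n res c mn k] by blast
    qed
  qed
  obtain m n :: nat where m: "m > 0" and n: "n > 0" and res: "real m * a - real n * b = 0" and mn: "m + n \<ge> 4"
    using exists_mn[OF a b assms(3)] by blast
  define h where "h = (\<lambda>(x::real, y::real). a^2 * x^2 + b^2 * y^2 + 1 * x^m * y^n)"
  have hmono: "h = (\<lambda>q. (monf (a^2) 2 0 q + monf (b^2) 0 2 q) + monf 1 m n q)"
    by (auto simp: h_def monf_def)
  have P2: "\<And>k. Ck k (\<lambda>q. monf (a^2) 2 0 q + monf (b^2) 0 2 q) UNIV"
    by (intro Ck_add open_UNIV Ck_monofn)
  have hsmooth: "smooth_on h UNIV"
    unfolding smooth_on_def hmono by (intro allI Ck_add open_UNIV P2 Ck_monofn)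
  have htc: "taylor_coeff h i j = h_low a b i j" if "i + j \<le> 2" for i j
  proof -
    have "taylor_coeff h i j = taylor_coeff (\<lambda>q. monf (a^2) 2 0 q + monf (b^2) 0 2 q) i j + taylor_coeff (monf 1 m n) i j"
      unfolding hmono by (rule tc_add_smooth[OF P2 Ck_monofn])
    also have "\<dots> = h_low a b i j"
      using that mn by (auto simp: tc_poly2 tc_mono h_low_def)
    finally show ?thesis .
  qed
  have nosol: "\<not> (\<exists>U z. open U \<and> (0, 0) \<in> U \<and> smooth_on z U
                   \<and> (\<forall>i j. i + j \<le> 2 \<longrightarrow> taylor_coeff z i j = z_low a b i j)
                   \<and> (\<forall>p\<in>U. (px z p)^2 + (py z p)^2 = h p))"
  proof
    assume "\<exists>U z. open U \<and> (0, 0) \<in> U \<and> smooth_on z U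
                   \<and> (\<forall>i j. i + j \<le> 2 \<longrightarrow> taylor_coeff z i j = z_low a b i j)
                   \<and> (\<forall>p\<in>U. (px z p)^2 + (py z p)^2 = h p)"
    then obtain U z where U: "open U" "(0, 0) \<in> U" "smooth_on z U"
      "\<forall>i j. i + j \<le> 2 \<longrightarrow> taylor_coeff z i j = z_low a b i j"
      "\<forall>p\<in>U. (px z p)^2 + (py z p)^2 = h p" by blast
    have "Ck (m + n) z U" using U(3) by (simp add: smooth_on_def)
    moreover have "\<forall>p\<in>U. (px z p)^2 + (py z p)^2 = (\<lambda>(x, y). a^2 * x^2 + b^2 * y^2 + 1 * x^m * y^n) p"
      using U(5) by (simp add: h_def)
    ultimately show False
      using Ck_part[OF a b m n res one_neq_zero mn order_refl U(1) U(2)] U(4) by blast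
  qed
  show ?thesis using part2 hsmooth htc nosol by blast
qed

end
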